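(* Let $\zeta \in \mathbb{C}^*$. The group $G_q(\zeta)$ is finite if and only if $\zeta$ is a primitive $n$-th root of unity for some $n \in \{2,3,4,5\}$.
   Context: Let $q$ be a formal parameter and let $R_q=\begin{pmatrix} q & 1\\ 0 & 1\end{pmatrix}$, $S_q=\begin{pmatrix} 0 & -q^{-1}\\ 1 & 0\end{pmatrix}\in \mathrm{GL}(2,\mathbb{Z}[q,q^{-1}])$. Let $G_q=\langle R_q,S_q\rangle\subset \mathrm{GL}(2,\mathbb{Z}[q,q^{-1}])$ be the group they generate. For $\zeta\in\mathbb{C}^*$, set $G_q(\zeta)=\{M_q|_{q=\zeta} : M_q\in G_q\}\subset \mathrm{GL}(2,\mathbb{C})$ (the group obtained by substituting $q=\zeta$ in all entries). *)

theory Defs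
  imports "HOL-Analysis.Analysis"
begin

text \<open>Elements of GL(2, Z[q,q^-1]) are represented faithfully as functions from the
  value of q to complex 2x2 matrices (a Laurent polynomial over Z is determined by its
  values on nonzero complex numbers).\<close>

definition Rq :: "complex \<Rightarrow> complex^2^2" where
  "Rq q = vector [vector [q, 1], vector [0, 1]]"

definition Sq :: "complex \<Rightarrow> complex^2^2" where
  "Sq q = vector [vector [0, - inverse q], vector [1, 0]]"

inductive_set Gq :: "(complex \<Rightarrow> complex^2^2) set" where
  one: "(\<lambda>q. mat 1) \<in> Gq"
| mulR: "M \<in> Gq \<Longrightarrow> (\<lambda>q. M q ** Rq q) \<in> Gq"
| mulS: "M \<in> Gq \<Longrightarrow> (\<lambda>q. M q ** Sq q) \<in> Gq"
| mulRinv: "M \<in> Gq \<Longrightarrow> (\<lambda>q. M q ** matrix_inv (Rq q)) \<in> Gq"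
| mulSinv: "M \<in> Gq \<Longrightarrow> (\<lambda>q. M q ** matrix_inv (Sq q)) \<in> Gq"

definition Gq_at :: "complex \<Rightarrow> (complex^2^2) set" where
  "Gq_at \<zeta> = {M \<zeta> | M. M \<in> Gq}"

definition primitive_root_of_unity :: "nat \<Rightarrow> complex \<Rightarrow> bool" where
  "primitive_root_of_unity n z \<longleftrightarrow> 0 < n \<and> z ^ n = 1 \<and> (\<forall>k. 0 < k \<and> k < n \<longrightarrow> z ^ k \<noteq> 1)"

end

theory Submission
  imports Defs "Berlekamp_Zassenhaus.Factor_Bound"
begin


section \<open>Frobenius congruences\<close>

lemma frob_add:
  fixes a b :: "'a::comm_ring_1"
  assumes p: "prime p"
  shows "\<exists>r. (a + b)^p = a^p + b^p + of_nat p * r"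
proof -
  have p0: "p \<noteq> 0" and p1: "p > 0" using p prime_gt_0_nat by auto
  define t where "t k = of_nat (p choose k) * a^k * b^(p-k)" for k
  define r where "r = (\<Sum>k\<in>{1..<p}. of_nat ((p choose k) div p) * a^k * b^(p-k))"
  have "(a+b)^p = (\<Sum>k\<le>p. t k)" unfolding t_def by (rule binomial_ring)
  also have "{..p} = insert 0 (insert p {1..<p})" using p1 by auto
  also have "(\<Sum>k\<in>insert 0 (insert p {1..<p}). t k) = t 0 + (t p + (\<Sum>k\<in>{1..<p}. t k))"
    using p1 by (simp add: sum.insert)
  also have "(\<Sum>k\<in>{1..<p}. t k) = of_nat p * r"
    unfolding r_def sum_distrib_left
  proof (rule sum.cong[OF refl])
    fix k assume k: "k \<in> {1..<p}"
    have "p dvd (p choose k)" using dvd_choose_prime[of k p] k p0 p by auto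
    then have "p choose k = p * ((p choose k) div p)" by simp
    then have "(of_nat (p choose k) :: 'a) = of_nat p * of_nat ((p choose k) div p)"
      by (metis of_nat_mult)
    then show "t k = of_nat p * (of_nat ((p choose k) div p) * a ^ k * b ^ (p - k))"
      unfolding t_def by (simp add: mult.assoc)
  qed
  finally have "(a+b)^p = a^p + b^p + of_nat p * r" unfolding t_def using p1 by (simp add: algebra_simps)
  then show ?thesis by blast
qed

lemma frob_int_nat:
  assumes p: "prime p"
  shows "int p dvd int m ^ p - int m"
proof (induct m)
  case 0 then show ?case using p prime_gt_0_nat by (simp add: zero_power)
next
  case (Suc m)
  obtain r :: int where r: "(1 + int m)^p = 1^p + int m ^ p + of_nat p * r" using frob_add[OF p] by blast
  have eq: "int (Suc m) = 1 + int m" by simp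
  have e: "int (Suc m) ^ p - int (Suc m) = (int m ^ p - int m) + int p * r"
    by (simp only: eq, subst r) simp
  have "int p dvd (int m ^ p - int m) + int p * r" using Suc by simp
  then show ?case unfolding e .
qed

lemma frob_int:
  fixes a :: int
  assumes p: "prime p"
  shows "int p dvd a ^ p - a"
proof -
  have pp: "int p > 0" using p prime_gt_0_nat by simp
  define m where "m = nat (a mod int p)"
  have am: "int m = a mod int p" unfolding m_def using pp by simp
  have c1: "[a = int m] (mod int p)" using am by (simp add: cong_def)
  then have c2: "[a^p = int m ^ p] (mod int p)" by (rule cong_pow)
  have c3: "[int m ^ p = int m] (mod int p)" using frob_int_nat[OF p, of m]
    by (simp add: cong_iff_dvd_diff)
  have "[a^p = a] (mod int p)" using c2 c3 c1 by (meson cong_sym cong_trans)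
  then show ?thesis by (simp add: cong_iff_dvd_diff)
qed

definition pcong :: "int \<Rightarrow> int poly \<Rightarrow> int poly \<Rightarrow> bool" where
  "pcong P a b \<longleftrightarrow> (\<exists>r. a - b = Polynomial.smult P r)"

lemma pcong_refl: "pcong P a a"
  unfolding pcong_def by (rule exI[of _ 0]) simp

lemma pcong_trans: "pcong P a b \<Longrightarrow> pcong P b c \<Longrightarrow> pcong P a c"
  unfolding pcong_def by (metis diff_add_cancel add_diff_cancel_left' smult_add_right add.commute diff_diff_eq2 diff_add_eq)

lemma pcong_add: "pcong P a b \<Longrightarrow> pcong P c d \<Longrightarrow> pcong P (a + c) (b + d)"
  unfolding pcong_def
proof (elim exE)
  fix r s assume "a - b = Polynomial.smult P r" "c - d = Polynomial.smult P s"
  then have "a + c - (b + d) = Polynomial.smult P (r + s)" by (simp add: smult_add_right algebra_simps)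
  then show "\<exists>r. a + c - (b + d) = Polynomial.smult P r" by blast
qed

lemma pcong_mult: "pcong P a b \<Longrightarrow> pcong P c d \<Longrightarrow> pcong P (a * c) (b * d)"
  unfolding pcong_def
proof (elim exE)
  fix r s assume h: "a - b = Polynomial.smult P r" "c - d = Polynomial.smult P s"
  have "a * c - b * d = (a - b) * c + b * (c - d)" by (simp add: algebra_simps)
  also have "\<dots> = Polynomial.smult P (r * c + b * s)" using h by (simp add: smult_add_right algebra_simps)
  finally show "\<exists>r. a * c - b * d = Polynomial.smult P r" by blast
qed

lemma frob_poly:
  fixes h :: "int poly"
  assumes p: "prime p"
  shows "pcong (int p) (h^p) (pcompose h ([:0,1:]^p))"
proof (induct h)
  case 0
  then show ?case using p prime_gt_0_nat by (simp add: zero_power pcong_refl)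
next
  case (pCons a t)
  have dec: "pCons a t = [:a:] + [:0,1:] * t" by simp
  obtain r where r: "([:a:] + [:0,1:] * t)^p = [:a:]^p + ([:0,1:] * t)^p + of_nat p * r"
    using frob_add[OF p] by blast
  have e1: "pcong (int p) ((pCons a t)^p) ([:a:]^p + ([:0,1:]^p * t^p))"
  proof -
    have r': "(pCons a t)^p = [:a:]^p + [:0,1:]^p * t^p + of_nat p * r"
      using r unfolding power_mult_distrib dec[symmetric] .
    have "of_nat p * r = Polynomial.smult (int p) r" by (simp add: of_nat_poly)
    then have "(pCons a t)^p - ([:a:]^p + ([:0,1:]^p * t^p)) = Polynomial.smult (int p) r"
      unfolding r' by simp
    then show ?thesis unfolding pcong_def by blast
  qed
  obtain k where k: "a^p - a = int p * k" using frob_int[OF p, of a] by (auto elim: dvdE)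
  have e2: "pcong (int p) ([:a:]^p) [:a:]"
    unfolding pcong_def by (rule exI[of _ "[:k:]"]) (simp add: poly_const_pow k)
  have e3: "pcong (int p) ([:0,1:]^p * t^p) ([:0,1:]^p * pcompose t ([:0,1:]^p))"
    by (rule pcong_mult[OF pcong_refl pCons(2)])
  have "pcong (int p) ((pCons a t)^p) ([:a:] + [:0,1:]^p * pcompose t ([:0,1:]^p))"
    by (rule pcong_trans[OF e1 pcong_add[OF e2 e3]])
  then show ?case by (simp add: pcompose_pCons)
qed



lemma gcd_root:
  fixes f g :: "int poly" and z :: complex
  assumes f0: "f \<noteq> 0" and hf: "poly (of_int_poly f) z = 0" and hg: "poly (of_int_poly g) z = 0"
  shows "poly (of_int_poly (gcd f g)) z = 0"
proof -
  let ?fQ = "of_int_poly f :: rat poly"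
  let ?gQ = "of_int_poly g :: rat poly"
  define u where "u = fst (bezout_coefficients ?fQ ?gQ)"
  define v where "v = snd (bezout_coefficients ?fQ ?gQ)"
  have bz: "u * ?fQ + v * ?gQ = gcd ?fQ ?gQ" unfolding u_def v_def by (rule bezout_coefficients_fst_snd)
  have gq: "gcd ?fQ ?gQ = Polynomial.smult (inverse (of_int (lead_coeff (gcd f g)))) (of_int_poly (gcd f g))"
    by (rule gcd_rat_to_gcd_int)
  interpret qh: map_poly_comm_ring_hom "of_rat :: rat \<Rightarrow> complex" ..
  define \<phi> where "\<phi> P = poly (map_poly (of_rat :: rat \<Rightarrow> complex) P) z" for P
  have \<phi>add: "\<phi> (P + Q) = \<phi> P + \<phi> Q" for P Q by (simp add: \<phi>_def hom_distribs)
  have \<phi>mult: "\<phi> (P * Q) = \<phi> P * \<phi> Q" for P Q by (simp add: \<phi>_def hom_distribs)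
  have \<phi>smult: "\<phi> (Polynomial.smult c P) = of_rat c * \<phi> P" for c P by (simp add: \<phi>_def hom_distribs)
  have \<phi>int: "\<phi> (of_int_poly h) = poly (of_int_poly h) z" for h :: "int poly"
  proof -
    have "map_poly (of_rat :: rat \<Rightarrow> complex) (of_int_poly h) = map_poly (of_rat \<circ> of_int) h"
      by (rule map_poly_map_poly) simp
    also have "(of_rat \<circ> of_int :: int \<Rightarrow> complex) = of_int" by (rule ext) simp
    finally show ?thesis unfolding \<phi>_def by simp
  qed
  have "\<phi> (gcd ?fQ ?gQ) = 0" unfolding bz[symmetric] \<phi>add \<phi>mult \<phi>int hf hg by simp
  then have "of_rat (inverse (of_int (lead_coeff (gcd f g)))) * poly (of_int_poly (gcd f g)) z = 0"
    unfolding gq \<phi>smult \<phi>int .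
  moreover have "lead_coeff (gcd f g) \<noteq> 0" using f0 by simp
  ultimately show ?thesis using f0 by auto
qed

lemma min_factor:
  fixes z :: complex and F :: "int poly"
  assumes F0: "F \<noteq> 0" and lcF: "lead_coeff F = 1" and hF: "poly (of_int_poly F) z = 0"
  obtains f where "f dvd F" "poly (of_int_poly f) z = 0" "\<And>g. poly (of_int_poly g) z = 0 \<Longrightarrow> f dvd g"
proof -
  let ?S = "\<lambda>f. f dvd F \<and> poly (of_int_poly f) z = 0"
  obtain f where fS: "?S f" and fmin: "\<And>f'. ?S f' \<Longrightarrow> degree f \<le> degree f'"
    using ex_has_least_nat[of ?S F degree] hF by auto
  have f0: "f \<noteq> 0" using fS F0 by auto
  have "f dvd g" if hg: "poly (of_int_poly g) z = 0" for g
  proof -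
    let ?d = "gcd f g"
    have d_f: "?d dvd f" by simp
    have dS: "?S ?d" using d_f fS dvd_trans gcd_root[OF f0 _ hg] by blast
    have d0: "?d \<noteq> 0" using f0 by simp
    from d_f obtain e where fe: "f = ?d * e" by (rule dvdE)
    have e0: "e \<noteq> 0" using fe f0 by auto
    have "degree f = degree ?d + degree e" using fe d0 e0 degree_mult_eq by metis
    moreover have "degree f \<le> degree ?d" using fmin dS by blast
    ultimately have "degree e = 0" by simp
    then obtain c where ec: "e = [:c:]" by (metis degree_eq_zeroE)
    have "e dvd F" using fe fS by (metis dvd_trans dvd_triv_right)
    then obtain k where "F = e * k" by (auto elim: dvdE)
    then have "lead_coeff F = c * lead_coeff k" using ec by (simp add: lead_coeff_mult)
    then have "c dvd 1" using lcF by (metis dvdI)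
    then have "\<bar>c\<bar> = 1" by simp
    then have cc: "c * c = 1" by (metis abs_mult_self_eq mult_1_right)
    have "f * [:c:] = ?d * e * [:c:]" by (rule arg_cong[of _ _ "\<lambda>x. x * [:c:]"]) (rule fe)
    also have "\<dots> = ?d * [:c * c:]" by (simp add: ec mult.assoc)
    finally have "f * [:c:] = ?d * [:c * c:]" .
    then have "?d = f * [:c:]" using cc by simp
    then have "f dvd ?d" by (metis dvd_triv_left)
    then show "f dvd g" using dvd_trans gcd_dvd2 by blast
  qed
  then show ?thesis using that fS by blast
qed

lemma const_comb:
  fixes f A B :: "int poly" and c P :: int
  assumes f0: "f \<noteq> 0" and lc: "\<bar>lead_coeff f\<bar> = 1" and df: "degree f > 0"
    and eq: "[:c:] = Polynomial.smult P A + f * B"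
  shows "P dvd c"
proof -
  obtain q r where qr: "pseudo_divmod A f = (q, r)" by (cases "pseudo_divmod A f") auto
  define u where "u = lead_coeff f ^ (Suc (degree A) - degree f)"
  have A: "Polynomial.smult u A = f * q + r" and r: "r = 0 \<or> degree r < degree f"
    using pseudo_divmod[OF f0 qr] unfolding u_def by auto
  have "\<bar>u\<bar> = 1" unfolding u_def using lc by (simp add: power_abs)
  then have uu: "u * u = 1" by (metis abs_mult_self_eq mult_1_right)
  define W where "W = Polynomial.smult P q + Polynomial.smult u B"
  have "Polynomial.smult u [:c:] = Polynomial.smult P (Polynomial.smult u A) + f * Polynomial.smult u B"
    using arg_cong[OF eq, of "Polynomial.smult u"] by (simp add: smult_add_right mult.commute mult.left_commute)
  then have eq2: "[:u * c:] - Polynomial.smult P r = f * W"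
    unfolding A W_def by (simp add: smult_add_right algebra_simps)
  have W0: "W = 0"
  proof (rule ccontr)
    assume "W \<noteq> 0"
    then have "degree (f * W) \<ge> degree f" using f0 by (simp add: degree_mult_eq)
    moreover have "degree ([:u * c:] - Polynomial.smult P r) < degree f"
    proof -
      have "degree ([:u * c:] - Polynomial.smult P r) \<le> max (degree [:u * c:]) (degree (Polynomial.smult P r))"
        by (rule degree_diff_le_max)
      moreover have "degree (Polynomial.smult P r) \<le> degree r" by (rule degree_smult_le)
      moreover have "degree r < degree f" using r df by auto
      ultimately show ?thesis using df by simp
    qed
    ultimately show False using eq2 by simp
  qed
  have "[:u * c:] = Polynomial.smult P r" using eq2 W0 by simp
  then have "Polynomial.coeff [:u * c:] 0 = Polynomial.coeff (Polynomial.smult P r) 0" by simp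
  then have "u * c = P * Polynomial.coeff r 0" by simp
  then have "P dvd u * c" by simp
  then have "P dvd u * (u * c)" by simp
  then show ?thesis using uu by (simp add: mult.assoc[symmetric])
qed

lemma power_diff_dvd':
  fixes a b :: "'a::comm_ring_1"
  shows "a - b dvd a^k - b^k"
proof (induct k)
  case 0 then show ?case by simp
next
  case (Suc k)
  have "a^Suc k - b^Suc k = a * (a^k - b^k) + (a - b) * b^k" by (simp add: algebra_simps)
  then show ?case using Suc by simp
qed

lemma pow_add_mult:
  fixes a f b :: "'a::comm_ring_1"
  shows "\<exists>Y. (a + f * b)^k = a^k + f * Y"
proof -
  have "(a + f*b) - a dvd (a + f*b)^k - a^k" by (rule power_diff_dvd')
  then have "f dvd (a + f*b)^k - a^k" by (metis add_diff_cancel_left' dvd_mult_left)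
  then obtain Y where "(a + f*b)^k - a^k = f * Y" by (auto elim: dvdE)
  then have "(a + f * b)^k = a^k + f * Y" by (simp add: algebra_simps)
  then show ?thesis by blast
qed



lemma prime_step:
  fixes z :: complex and n p :: nat and g :: "int poly"
  assumes n0: "n > 0" and zn: "z^n = 1" and p: "prime p" and pn: "\<not> p dvd n"
    and hg: "poly (of_int_poly g) z = 0"
  shows "poly (of_int_poly g) (z^p) = 0"
proof -
  define X :: "int poly" where "X = [:0,1:]"
  define F :: "int poly" where "F = X^n - 1"
  have evX: "poly (of_int_poly X) w = w" for w :: complex by (simp add: X_def)
  have evF: "poly (of_int_poly F) w = w^n - 1" for w :: complex
    by (simp add: F_def hom_distribs evX)
  have cF: "Polynomial.coeff F n = 1" using n0 coeff_linear_power[of "0::int" n] by (simp add: F_def X_def)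
  have dX: "degree (X^n) \<le> n" using degree_power_le[of X n] by (simp add: X_def)
  have dF: "degree F \<le> n"
    unfolding F_def by (rule degree_diff_le[OF dX]) simp
  have F0: "F \<noteq> 0" using cF by auto
  have dF2: "degree F = n" using dF cF by (metis le_antisym le_degree zero_neq_one)
  have lcF: "lead_coeff F = 1" using dF2 cF by simp
  have hF: "poly (of_int_poly F) z = 0" using evF zn by simp
  obtain f where fF: "f dvd F" and fz: "poly (of_int_poly f) z = 0"
    and fmin: "\<And>g. poly (of_int_poly g) z = 0 \<Longrightarrow> f dvd g"
    using min_factor[OF F0 lcF hF] by blast
  from fF obtain h where Ffh: "F = f * h" by (rule dvdE)
  have f0: "f \<noteq> 0" using F0 Ffh by auto
  have "lead_coeff f * lead_coeff h = 1" using lcF Ffh by (simp add: lead_coeff_mult)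
  then have "lead_coeff f dvd 1" by (metis dvdI)
  then have lcf: "\<bar>lead_coeff f\<bar> = 1" by simp
  have df: "degree f > 0"
  proof (rule ccontr)
    assume "\<not> degree f > 0"
    then obtain c where "f = [:c:]" by (metis degree_eq_zeroE neq0_conv)
    then show False using fz f0 by simp
  qed
  have key: "poly (of_int_poly f) (z^p) = 0"
  proof (rule ccontr)
    assume nz: "poly (of_int_poly f) (z^p) \<noteq> 0"
    have "(z^p)^n = 1" using zn by (metis power_mult mult.commute power_one)
    then have "poly (of_int_poly F) (z^p) = 0" using evF by simp
    then have hzp: "poly (of_int_poly h) (z^p) = 0" using Ffh nz by (simp add: hom_distribs)
    define g2 where "g2 = pcompose h (X^p)"
    have "poly (of_int_poly g2) z = poly (of_int_poly h) (z^p)"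
      by (simp add: g2_def hom_distribs poly_pcompose evX)
    then have "f dvd g2" using fmin hzp by simp
    then obtain k where g2k: "g2 = f * k" by (rule dvdE)
    obtain r where hr: "h^p - g2 = Polynomial.smult (int p) r"
      using frob_poly[OF p, of h] unfolding pcong_def g2_def X_def by blast
    have hp: "h^p = f * k + Polynomial.smult (int p) r" using hr g2k by (simp add: algebra_simps)
    define D where "D = pderiv F"
    have D1: "D = Polynomial.smult (int n) (X^(n-1))"
      unfolding D_def F_def by (simp add: pderiv_diff pderiv_power X_def pderiv_pCons)
    have D2: "D = h * pderiv f + f * pderiv h"
      unfolding D_def Ffh pderiv_mult by (simp add: algebra_simps)
    obtain Y where Y: "(h * pderiv f + f * pderiv h)^p = (h * pderiv f)^p + f * Y"
      using pow_add_mult by blast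
    have Dp: "D^p = Polynomial.smult (int p) (r * pderiv f ^ p) + f * (k * pderiv f ^ p + Y)"
      unfolding D2 Y power_mult_distrib hp by (simp add: algebra_simps)
    have XX: "(X^(n-1))^p * X^p = (X^n)^p"
    proof -
      have "(X^(n-1))^p * X^p = X^((n-1)*p + p)" by (simp add: power_add power_mult)
      also have "(n-1)*p + p = n * p" using n0 by (cases n) auto
      finally show ?thesis by (simp add: power_mult)
    qed
    have "X^n - 1 dvd (X^n)^p - 1^p" by (rule power_diff_dvd')
    then obtain C where C: "(X^n)^p - 1 = F * C" unfolding F_def by (auto elim: dvdE)
    have "D^p * X^p = Polynomial.smult (int n ^ p) ((X^(n-1))^p * X^p)"
      by (simp only: D1 smult_power mult_smult_left)
    also have "\<dots> = Polynomial.smult (int n ^ p) ((X^n)^p)" by (simp only: XX)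
    also have "(X^n)^p = 1 + F * C" using C by (simp add: algebra_simps)
    finally have "D^p * X^p = [:int n ^ p:] + f * (h * Polynomial.smult (int n ^ p) C)"
      unfolding Ffh by (simp add: smult_add_right algebra_simps)
    then have "[:int n ^ p:] = Polynomial.smult (int p) (r * pderiv f ^ p * X^p)
        + f * ((k * pderiv f ^ p + Y) * X^p - h * Polynomial.smult (int n ^ p) C)"
      unfolding Dp by (simp add: algebra_simps)
    then have "int p dvd int n ^ p" by (rule const_comb[OF f0 lcf df])
    then have "p dvd n ^ p" using int_dvd_int_iff[of p "n^p"] by simp
    then have "p dvd n" using p prime_dvd_power by blast
    then show False using pn by simp
  qed
  from fmin[OF hg] obtain m where "g = f * m" by (rule dvdE)
  then show ?thesis using key by (simp add: hom_distribs)
qed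

lemma coprime_step:
  fixes z :: complex and n m :: nat and g :: "int poly"
  assumes n0: "n > 0" and zn: "z^n = 1" and cop: "algebraic_semidom_class.coprime m n"
    and hg: "poly (of_int_poly g) z = 0"
  shows "poly (of_int_poly g) (z^m) = 0"
  using cop
proof (induct m rule: less_induct)
  case (less m)
  show ?case
  proof (cases "m = 1")
    case True then show ?thesis using hg by simp
  next
    case False
    show ?thesis
    proof (cases "m = 0")
      case True
      then have "n = 1" using less.prems(1) by simp
      then have "z = 1" using zn by simp
      then show ?thesis using True hg by simp
    next
      case False
      with \<open>m \<noteq> 1\<close> obtain p where p: "prime p" "p dvd m" using prime_factor_nat by blast
      from p(2) obtain m' where mm: "m = p * m'" by (rule dvdE)
      have m'0: "m' > 0" using False mm by (cases m') auto
      have "m' < m" using mm p m'0 prime_gt_1_nat[OF p(1)] by simp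
      have cm': "algebraic_semidom_class.coprime m' n" using less.prems(1) mm by simp
      have pn: "\<not> p dvd n"
      proof
        assume "p dvd n"
        then have "is_unit p" using coprime_common_divisor[OF less.prems(1) p(2)] by blast
        then show False using p(1) by (simp add: prime_nat_iff)
      qed
      have ih: "poly (of_int_poly g) (z^m') = 0" using less.hyps[OF \<open>m' < m\<close> cm'] .
      have "(z^m')^n = 1" using zn by (metis power_mult mult.commute power_one)
      then have "poly (of_int_poly g) ((z^m')^p) = 0" by (rule prime_step[OF n0 _ p(1) pn ih])
      then show ?thesis using mm by (simp add: power_mult mult.commute)
    qed
  qed
qed



lemma mat2_eqI:
  fixes A B :: "'a^2^2"
  assumes "A$1$1 = B$1$1" "A$1$2 = B$1$2" "A$2$1 = B$2$1" "A$2$2 = B$2$2"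
  shows "A = B"
  using assms by (simp add: Finite_Cartesian_Product.vec_eq_iff forall_2)

lemma mult_entry: "((A::'a::comm_semiring_1^2^2) ** B)$i$j = A$i$1 * B$1$j + A$i$2 * B$2$j"
  by (simp add: matrix_matrix_mult_def sum_2)

lemma Rq_entries [simp]: "Rq q$1$1 = q" "Rq q$1$2 = 1" "Rq q$2$1 = 0" "Rq q$2$2 = 1"
  by (simp_all add: Rq_def)

lemma Sq_entries [simp]: "Sq q$1$1 = 0" "Sq q$1$2 = - inverse q" "Sq q$2$1 = 1" "Sq q$2$2 = 0"
  by (simp_all add: Sq_def)

lemma mat1_entries [simp]: "(Finite_Cartesian_Product.mat 1 :: 'a::zero_neq_one^2^2)$1$1 = 1" "(Finite_Cartesian_Product.mat 1 :: 'a::zero_neq_one^2^2)$1$2 = 0"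
   "(Finite_Cartesian_Product.mat 1 :: 'a::zero_neq_one^2^2)$2$1 = 0" "(Finite_Cartesian_Product.mat 1 :: 'a::zero_neq_one^2^2)$2$2 = 1"
  by (simp_all add: Finite_Cartesian_Product.mat_def)

lemma matrix_inv_eqI:
  fixes A B :: "'a::field^'n^'n"
  assumes "A ** B = Finite_Cartesian_Product.mat 1" "B ** A = Finite_Cartesian_Product.mat 1"
  shows "matrix_inv A = B"
proof -
  have ex: "\<exists>A'. A ** A' = Finite_Cartesian_Product.mat 1 \<and> A' ** A = Finite_Cartesian_Product.mat 1" using assms by blast
  let ?C = "matrix_inv A"
  have C: "A ** ?C = Finite_Cartesian_Product.mat 1 \<and> ?C ** A = Finite_Cartesian_Product.mat 1"
    unfolding matrix_inv_def by (rule someI_ex[OF ex])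
  have "?C = ?C ** (A ** B)" using assms by simp
  also have "\<dots> = (?C ** A) ** B" by (simp add: matrix_mul_assoc)
  also have "\<dots> = B" using C by simp
  finally show ?thesis .
qed

definition RinvM :: "complex \<Rightarrow> complex^2^2" where
  "RinvM q = vector [vector [inverse q, - inverse q], vector [0, 1]]"
definition SinvM :: "complex \<Rightarrow> complex^2^2" where
  "SinvM q = vector [vector [0, 1], vector [-q, 0]]"

lemma RinvM_entries [simp]: "RinvM q$1$1 = inverse q" "RinvM q$1$2 = - inverse q" "RinvM q$2$1 = 0" "RinvM q$2$2 = 1"
  by (simp_all add: RinvM_def)
lemma SinvM_entries [simp]: "SinvM q$1$1 = 0" "SinvM q$1$2 = 1" "SinvM q$2$1 = -q" "SinvM q$2$2 = 0"
  by (simp_all add: SinvM_def)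

lemma Rinv_eq: "q \<noteq> 0 \<Longrightarrow> matrix_inv (Rq q) = RinvM q"
  by (rule matrix_inv_eqI; rule mat2_eqI; simp add: mult_entry field_simps)

lemma Sinv_eq: "q \<noteq> 0 \<Longrightarrow> matrix_inv (Sq q) = SinvM q"
  by (rule matrix_inv_eqI; rule mat2_eqI; simp add: mult_entry field_simps)

primrec Wk :: "nat \<Rightarrow> complex \<Rightarrow> complex^2^2" where
  "Wk 0 = (\<lambda>q. Finite_Cartesian_Product.mat 1)"
| "Wk (Suc k) = (\<lambda>q. Wk k q ** Rq q ** Rq q ** Rq q ** Sq q)"

lemma Wk_in: "Wk k \<in> Gq"
proof (induct k)
  case 0 show ?case by (simp add: Gq.one)
next
  case (Suc k)
  show ?case using Gq.mulS[OF Gq.mulR[OF Gq.mulR[OF Gq.mulR[OF Suc]]]] by simp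
qed

lemma W_step:
  fixes M :: "complex^2^2"
  assumes "q \<noteq> 0"
  shows "(M ** Rq q ** Rq q ** Rq q ** Sq q)$2$1 = (1+q+q^2) * M$2$1 + M$2$2"
    and "(M ** Rq q ** Rq q ** Rq q ** Sq q)$2$2 = - (q^2 * M$2$1)"
  using assms by (simp_all add: mult_entry field_simps power2_eq_square power3_eq_cube)

fun aseq :: "real \<Rightarrow> nat \<Rightarrow> real" where
  "aseq c 0 = 0"
| "aseq c (Suc 0) = 1"
| "aseq c (Suc (Suc k)) = c * aseq c (Suc k) - aseq c k"

lemma aseq_grow:
  assumes "c \<ge> 2"
  shows "aseq c k \<ge> 0 \<and> aseq c (Suc k) \<ge> aseq c k + 1"
proof (induct k)
  case 0 show ?case by simp
next
  case (Suc k)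
  then have h1: "aseq c k \<ge> 0" and h2: "aseq c (Suc k) \<ge> aseq c k + 1" by auto
  have "c * aseq c (Suc k) \<ge> 2 * aseq c (Suc k)"
    using mult_right_mono[OF assms, of "aseq c (Suc k)"] h1 h2 by simp
  then show ?case using h1 h2 by (simp only: aseq.simps) linarith
qed

lemma aseq_mono:
  assumes "c \<ge> 2"
  shows "strict_mono (aseq c)"
proof (rule strict_monoI_Suc)
  fix n show "aseq c n < aseq c (Suc n)" using aseq_grow[OF assms, of n] by linarith
qed

lemma unit_sum:
  fixes q :: complex
  assumes "norm q = 1"
  shows "1 + q + q^2 = q * of_real (1 + 2 * Re q)"
proof -
  have "q * cnj q = 1" using assms complex_norm_square[of q] by simp
  moreover have "q + cnj q = of_real (2 * Re q)" by (rule complex_add_cnj)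
  moreover have "q * (1 + (q + cnj q)) = q + q * q + q * cnj q"
    by (simp add: algebra_simps)
  ultimately have "q * (1 + (q + cnj q)) = 1 + q + q^2"
    by (simp add: power2_eq_square)
  then show ?thesis using \<open>q + cnj q = _\<close> by simp
qed

lemma Wk_entries:
  fixes q :: complex
  assumes "norm q = 1"
  defines "c \<equiv> 1 + 2 * Re q"
  shows "Wk (Suc k) q $2$1 = q^k * of_real (aseq c (Suc k)) \<and>
         Wk (Suc k) q $2$2 = - (q^(Suc k) * of_real (aseq c k))"
proof (induct k)
  case 0
  have "q \<noteq> 0" using assms by auto
  then show ?case by (simp add: mult_entry field_simps)
next
  case (Suc k)
  have q0: "q \<noteq> 0" using assms by auto
  have s: "1 + q + q^2 = q * of_real c" using unit_sum[OF assms(1)] c_def by simp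
  have "Wk (Suc (Suc k)) q $2$1 = (1+q+q^2) * Wk (Suc k) q $2$1 + Wk (Suc k) q $2$2"
    using W_step(1)[OF q0] by simp
  also have "\<dots> = q^(Suc k) * of_real (aseq c (Suc (Suc k)))"
    using Suc s by (simp add: algebra_simps)
  finally have e1: "Wk (Suc (Suc k)) q $2$1 = q^(Suc k) * of_real (aseq c (Suc (Suc k)))" .
  have "Wk (Suc (Suc k)) q $2$2 = - (q^2 * Wk (Suc k) q $2$1)"
    using W_step(2)[OF q0] by simp
  also have "\<dots> = - (q^(Suc (Suc k)) * of_real (aseq c (Suc k)))"
    using Suc by (simp add: algebra_simps power2_eq_square)
  finally show ?case using e1 by simp
qed

lemma infinite_unit:
  fixes q :: complex
  assumes "norm q = 1" "Re q \<ge> 1/2"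
  shows "infinite (Gq_at q)"
proof
  assume fin: "finite (Gq_at q)"
  define c where "c = 1 + 2 * Re q"
  have c2: "c \<ge> 2" using assms c_def by simp
  have nrm: "norm (Wk k q $2$1) = aseq c k" for k
  proof (cases k)
    case 0 then show ?thesis by simp
  next
    case (Suc j)
    have "aseq c k \<ge> 0" using aseq_grow[OF c2] by blast
    then show ?thesis using Wk_entries[OF assms(1), of j] Suc assms(1)
      by (simp add: c_def norm_mult norm_power)
  qed
  have inj: "inj (\<lambda>k. Wk k q)"
  proof (rule injI)
    fix a b assume "Wk a q = Wk b q"
    then have "aseq c a = aseq c b" using nrm by metis
    then show "a = b" using strict_mono_eq[OF aseq_mono[OF c2]] by simp
  qed
  have "range (\<lambda>k. Wk k q) \<subseteq> Gq_at q" unfolding Gq_at_def using Wk_in by blast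
  then have "finite (range (\<lambda>k. Wk k q))" using fin finite_subset by blast
  then show False using inj finite_imageD by blast
qed

primrec Rk :: "nat \<Rightarrow> complex \<Rightarrow> complex^2^2" where
  "Rk 0 = (\<lambda>q. Finite_Cartesian_Product.mat 1)"
| "Rk (Suc k) = (\<lambda>q. Rk k q ** Rq q)"

lemma Rk_in: "Rk k \<in> Gq"
proof (induct k)
  case 0 show ?case by (simp add: Gq.one)
next
  case (Suc k)
  show ?case using Gq.mulR[OF Suc] by simp
qed

lemma Rk_entry: "Rk k q $1$1 = q^k"
  by (induct k) (simp_all add: mult_entry)

lemma infinite_nonroot:
  fixes q :: complex
  assumes "q \<noteq> 0" "\<forall>k>0. q^k \<noteq> 1"
  shows "infinite (Gq_at q)"
proof
  assume fin: "finite (Gq_at q)"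
  have inj: "inj (\<lambda>k. Rk k q)"
  proof (rule injI)
    fix a b assume "Rk a q = Rk b q"
    then have e: "q^a = q^b" using Rk_entry by metis
    show "a = b"
    proof (rule ccontr)
      assume "a \<noteq> b"
      then consider "a < b" | "b < a" by linarith
      then show False
      proof cases
        case 1
        then have "q^b = q^a * q^(b-a)" by (simp add: power_add[symmetric])
        then have "q^(b-a) = 1" using e assms(1) by simp
        then show False using assms(2) 1 by simp
      next
        case 2
        then have "q^a = q^b * q^(a-b)" by (simp add: power_add[symmetric])
        then have "q^(a-b) = 1" using e assms(1) by simp
        then show False using assms(2) 2 by simp
      qed
    qed
  qed
  have "range (\<lambda>k. Rk k q) \<subseteq> Gq_at q" unfolding Gq_at_def using Rk_in by blast
  then have "finite (range (\<lambda>k. Rk k q))" using fin finite_subset by blast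
  then show False using inj finite_imageD by blast
qed

definition fR :: "complex \<Rightarrow> complex \<times> complex \<Rightarrow> complex \<times> complex" where
  "fR z v = (z * fst v, fst v + snd v)"
definition fS :: "complex \<Rightarrow> complex \<times> complex \<Rightarrow> complex \<times> complex" where
  "fS z v = (snd v, - (fst v * inverse z))"
definition sm :: "complex \<Rightarrow> complex \<times> complex \<Rightarrow> complex \<times> complex" where
  "sm c v = (c * fst v, c * snd v)"
definition rowp :: "complex^2^2 \<Rightarrow> 2 \<Rightarrow> complex \<times> complex" where
  "rowp M i = (M$i$1, M$i$2)"

lemma rowp_R: "rowp (M ** Rq z) i = fR z (rowp M i)"
  by (simp add: rowp_def fR_def mult_entry mult.commute)
lemma rowp_S: "rowp (M ** Sq z) i = fS z (rowp M i)"
  by (simp add: rowp_def fS_def mult_entry mult.commute)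

lemma inj_fR: "z \<noteq> 0 \<Longrightarrow> inj (fR z)"
  by (rule injI) (auto simp: fR_def prod_eq_iff)
lemma inj_fS: "z \<noteq> 0 \<Longrightarrow> inj (fS z)"
  by (rule injI) (auto simp: fS_def prod_eq_iff)

lemma RinvM_R: "z \<noteq> 0 \<Longrightarrow> RinvM z ** Rq z = Finite_Cartesian_Product.mat 1"
  by (rule mat2_eqI; simp add: mult_entry field_simps)
lemma SinvM_S: "z \<noteq> 0 \<Longrightarrow> SinvM z ** Sq z = Finite_Cartesian_Product.mat 1"
  by (rule mat2_eqI; simp add: mult_entry field_simps)

lemma finite_crit:
  fixes z :: complex and V :: "(complex \<times> complex) set"
  assumes z0: "z \<noteq> 0" and finV: "finite V" and e1: "(1,0) \<in> V" and e2: "(0,1) \<in> V"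
    and cR: "fR z ` V \<subseteq> V" and cS: "fS z ` V \<subseteq> V"
  shows "finite (Gq_at z)"
proof -
  have VR: "fR z ` V = V" by (rule endo_inj_surj[OF finV cR]) (metis inj_fR[OF z0] inj_on_subset subset_UNIV)
  have VS: "fS z ` V = V" by (rule endo_inj_surj[OF finV cS]) (metis inj_fS[OF z0] inj_on_subset subset_UNIV)
  have main: "M \<in> Gq \<Longrightarrow> \<forall>i. rowp (M z) i \<in> V" for M
  proof (induct rule: Gq.induct)
    case one
    show ?case using e1 e2 by (simp add: forall_2 rowp_def)
  next
    case (mulR M) then show ?case using cR by (auto simp: rowp_R)
  next
    case (mulS M) then show ?case using cS by (auto simp: rowp_S)
  next
    case (mulRinv M)
    show ?case
    proof
      fix i
      let ?u = "rowp (M z ** matrix_inv (Rq z)) i"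
      have "fR z ?u = rowp (M z ** matrix_inv (Rq z) ** Rq z) i" by (simp add: rowp_R)
      also have "\<dots> = rowp (M z) i"
        using RinvM_R[OF z0] Rinv_eq[OF z0] by (simp add: matrix_mul_assoc[symmetric])
      finally have eq: "fR z ?u = rowp (M z) i" .
      have "rowp (M z) i \<in> fR z ` V" using mulRinv VR by auto
      then obtain u' where "u' \<in> V" "fR z u' = fR z ?u" using eq by auto
      then show "?u \<in> V" using inj_fR[OF z0] by (metis injD)
    qed
  next
    case (mulSinv M)
    show ?case
    proof
      fix i
      let ?u = "rowp (M z ** matrix_inv (Sq z)) i"
      have "fS z ?u = rowp (M z ** matrix_inv (Sq z) ** Sq z) i" by (simp add: rowp_S)
      also have "\<dots> = rowp (M z) i"
        using SinvM_S[OF z0] Sinv_eq[OF z0] by (simp add: matrix_mul_assoc[symmetric])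
      finally have eq: "fS z ?u = rowp (M z) i" .
      have "rowp (M z) i \<in> fS z ` V" using mulSinv VS by auto
      then obtain u' where "u' \<in> V" "fS z u' = fS z ?u" using eq by auto
      then show "?u \<in> V" using inj_fS[OF z0] by (metis injD)
    qed
  qed
  define mk :: "(complex \<times> complex) \<times> (complex \<times> complex) \<Rightarrow> complex^2^2" where
    "mk = (\<lambda>(r1, r2). vector [vector [fst r1, snd r1], vector [fst r2, snd r2]])"
  have "Gq_at z \<subseteq> mk ` (V \<times> V)"
  proof
    fix A assume "A \<in> Gq_at z"
    then obtain M where M: "M \<in> Gq" "A = M z" unfolding Gq_at_def by blast
    have "A = mk (rowp A 1, rowp A 2)"
      by (rule mat2_eqI) (simp_all add: mk_def rowp_def)
    moreover have "(rowp A 1, rowp A 2) \<in> V \<times> V" using main[OF M(1)] M(2) by simp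
    ultimately show "A \<in> mk ` (V \<times> V)" by blast
  qed
  then show ?thesis using finV finite_subset by blast
qed

definition closR :: "complex \<Rightarrow> (complex \<times> complex) list \<Rightarrow> complex \<times> complex \<Rightarrow> bool" where
  "closR z L v \<longleftrightarrow> (\<exists>w\<in>set L. \<exists>a s. (s = 1 \<or> s = -1) \<and> fR z v = sm (s * z^a) w)"
definition closS :: "complex \<Rightarrow> (complex \<times> complex) list \<Rightarrow> complex \<times> complex \<Rightarrow> bool" where
  "closS z L v \<longleftrightarrow> (\<exists>w\<in>set L. \<exists>a s. (s = 1 \<or> s = -1) \<and> fS z v = sm (s * z^a) w)"

lemma pow_mod_root: "(z::complex)^n = 1 \<Longrightarrow> z^a = z^(a mod n)"
proof -
  assume h: "z^n = 1"
  have "z^a = z^(n * (a div n) + a mod n)" by simp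
  also have "\<dots> = (z^n)^(a div n) * z^(a mod n)" by (simp only: power_add power_mult)
  finally show ?thesis using h by simp
qed

lemma finite_from_reps:
  fixes z :: complex and L :: "(complex \<times> complex) list"
  assumes z0: "z \<noteq> 0" and zn: "z^n = 1" and n0: "n > 0"
    and e1: "(1,0) \<in> set L" and e2: "(0,1) \<in> set L"
    and cR: "\<forall>v\<in>set L. closR z L v" and cS: "\<forall>v\<in>set L. closS z L v"
  shows "finite (Gq_at z)"
proof -
  define C where "C = {c. \<exists>a. c = z^a \<or> c = - (z^a)}"
  have Csub: "C \<subseteq> (\<lambda>a. z^a) ` {..<n} \<union> (\<lambda>a. - (z^a)) ` {..<n}"
  proof
    fix c assume "c \<in> C"
    then obtain a where "c = z^a \<or> c = - (z^a)" unfolding C_def by blast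
    moreover have "z^a = z^(a mod n)" by (rule pow_mod_root[OF zn])
    moreover have "a mod n < n" using n0 by simp
    ultimately show "c \<in> (\<lambda>a. z^a) ` {..<n} \<union> (\<lambda>a. - (z^a)) ` {..<n}" by auto
  qed
  have finC: "finite C" by (rule finite_subset[OF Csub]) auto
  have Cmul: "c \<in> C \<Longrightarrow> (s = 1 \<or> s = -1) \<Longrightarrow> c * (s * z^a) \<in> C" for c s a
  proof -
    assume "c \<in> C" "s = 1 \<or> s = -1"
    then obtain b where "c = z^b \<or> c = - (z^b)" unfolding C_def by blast
    then have "c * (s * z^a) = z^(b+a) \<or> c * (s * z^a) = - (z^(b+a))"
      using \<open>s = 1 \<or> s = -1\<close> by (auto simp: power_add)
    then show ?thesis unfolding C_def by blast
  qed
  define V where "V = (\<lambda>(c, w). sm c w) ` (C \<times> set L)"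
  have finV: "finite V" unfolding V_def using finC by simp
  have C1: "1 \<in> C" unfolding C_def by (rule CollectI, rule exI[of _ 0]) simp
  have "(1,0) = sm 1 (1,0)" "(0,1) = sm 1 (0,1)" by (simp_all add: sm_def)
  then have v1: "(1,0) \<in> V" and v2: "(0,1) \<in> V" unfolding V_def using C1 e1 e2 by force+
  have smR: "fR z (sm c w) = sm c (fR z w)" for c w by (simp add: fR_def sm_def algebra_simps)
  have smS: "fS z (sm c w) = sm c (fS z w)" for c w by (simp add: fS_def sm_def algebra_simps)
  have smsm: "sm c (sm d w) = sm (c * d) w" for c d w by (simp add: sm_def)
  have VR: "fR z ` V \<subseteq> V"
  proof
    fix x assume "x \<in> fR z ` V"
    then obtain c w where cw: "c \<in> C" "w \<in> set L" "x = fR z (sm c w)" unfolding V_def by auto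
    from cR cw(2) obtain w' a s where w': "w' \<in> set L" "s = 1 \<or> s = -1" "fR z w = sm (s * z^a) w'"
      unfolding closR_def by blast
    have "x = sm (c * (s * z^a)) w'" using cw(3) w'(3) smR smsm by simp
    moreover have "c * (s * z^a) \<in> C" using Cmul[OF cw(1) w'(2)] .
    ultimately show "x \<in> V" unfolding V_def using w'(1) by force
  qed
  have VS: "fS z ` V \<subseteq> V"
  proof
    fix x assume "x \<in> fS z ` V"
    then obtain c w where cw: "c \<in> C" "w \<in> set L" "x = fS z (sm c w)" unfolding V_def by auto
    from cS cw(2) obtain w' a s where w': "w' \<in> set L" "s = 1 \<or> s = -1" "fS z w = sm (s * z^a) w'"
      unfolding closS_def by blast
    have "x = sm (c * (s * z^a)) w'" using cw(3) w'(3) smS smsm by simp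
    moreover have "c * (s * z^a) \<in> C" using Cmul[OF cw(1) w'(2)] .
    ultimately show "x \<in> V" unfolding V_def using w'(1) by force
  qed
  show ?thesis by (rule finite_crit[OF z0 finV v1 v2 VR VS])
qed

definition Lst2 :: "complex \<Rightarrow> (complex \<times> complex) list" where
  "Lst2 z = [(0, (1)), ((1), 0), ((- 1), (1))]"

lemma finite_n2:
  fixes z :: complex
  assumes h: "(1 + z) = 0"
  shows "finite (Gq_at z)"
proof -
  have z0: "z \<noteq> 0" using h by auto
  have zn: "z^2 = 1" using h by Groebner_Basis.algebra
  have zz: "z * z^1 = 1" using zn by Groebner_Basis.algebra
  have iz: "inverse z = z^1" using zz by (rule inverse_unique)
  have cR0: "closR z (Lst2 z) (0, (1))"
    unfolding closR_def
  proof (rule bexI[of _ "(0, (1))"], rule exI[of _ 0], rule exI[of _ "1"], intro conjI)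
    show "(1::complex) = 1 \<or> 1 = -1" by simp
    show "fR z (0, (1)) = sm (1 * z^0) (0, (1))"
      unfolding fR_def sm_def power_0 fst_conv snd_conv prod.inject
      by (rule conjI; ((simp add: algebra_simps power2_eq_square; fail) | Groebner_Basis.algebra | use h in Groebner_Basis.algebra))
    show "(0, (1)) \<in> set (Lst2 z)" by (simp add: Lst2_def)
  qed
  have cS0: "closS z (Lst2 z) (0, (1))"
    unfolding closS_def
  proof (rule bexI[of _ "((1), 0)"], rule exI[of _ 0], rule exI[of _ "1"], intro conjI)
    show "(1::complex) = 1 \<or> 1 = -1" by simp
    show "fS z (0, (1)) = sm (1 * z^0) ((1), 0)"
      unfolding fS_def sm_def iz power_0 fst_conv snd_conv prod.inject
      by (rule conjI; ((simp add: algebra_simps power2_eq_square; fail) | Groebner_Basis.algebra | use h in Groebner_Basis.algebra))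
    show "((1), 0) \<in> set (Lst2 z)" by (simp add: Lst2_def)
  qed
  have cR1: "closR z (Lst2 z) ((1), 0)"
    unfolding closR_def
  proof (rule bexI[of _ "((- 1), (1))"], rule exI[of _ 0], rule exI[of _ "1"], intro conjI)
    show "(1::complex) = 1 \<or> 1 = -1" by simp
    show "fR z ((1), 0) = sm (1 * z^0) ((- 1), (1))"
      unfolding fR_def sm_def power_0 fst_conv snd_conv prod.inject
      by (rule conjI; ((simp add: algebra_simps power2_eq_square; fail) | Groebner_Basis.algebra | use h in Groebner_Basis.algebra))
    show "((- 1), (1)) \<in> set (Lst2 z)" by (simp add: Lst2_def)
  qed
  have cS1: "closS z (Lst2 z) ((1), 0)"
    unfolding closS_def
  proof (rule bexI[of _ "(0, (1))"], rule exI[of _ 0], rule exI[of _ "1"], intro conjI)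
    show "(1::complex) = 1 \<or> 1 = -1" by simp
    show "fS z ((1), 0) = sm (1 * z^0) (0, (1))"
      unfolding fS_def sm_def iz power_0 fst_conv snd_conv prod.inject
      by (rule conjI; ((simp add: algebra_simps power2_eq_square; fail) | Groebner_Basis.algebra | use h in Groebner_Basis.algebra))
    show "(0, (1)) \<in> set (Lst2 z)" by (simp add: Lst2_def)
  qed
  have cR2: "closR z (Lst2 z) ((- 1), (1))"
    unfolding closR_def
  proof (rule bexI[of _ "((1), 0)"], rule exI[of _ 0], rule exI[of _ "1"], intro conjI)
    show "(1::complex) = 1 \<or> 1 = -1" by simp
    show "fR z ((- 1), (1)) = sm (1 * z^0) ((1), 0)"
      unfolding fR_def sm_def power_0 fst_conv snd_conv prod.inject
      by (rule conjI; ((simp add: algebra_simps power2_eq_square; fail) | Groebner_Basis.algebra | use h in Groebner_Basis.algebra))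
    show "((1), 0) \<in> set (Lst2 z)" by (simp add: Lst2_def)
  qed
  have cS2: "closS z (Lst2 z) ((- 1), (1))"
    unfolding closS_def
  proof (rule bexI[of _ "((- 1), (1))"], rule exI[of _ 1], rule exI[of _ "1"], intro conjI)
    show "(1::complex) = 1 \<or> 1 = -1" by simp
    show "fS z ((- 1), (1)) = sm (1 * z^1) ((- 1), (1))"
      unfolding fS_def sm_def iz fst_conv snd_conv prod.inject
      by (rule conjI; ((simp add: algebra_simps power2_eq_square; fail) | Groebner_Basis.algebra | use h in Groebner_Basis.algebra))
    show "((- 1), (1)) \<in> set (Lst2 z)" by (simp add: Lst2_def)
  qed
  have mem: "v \<in> set (Lst2 z) \<Longrightarrow> v = (0, (1)) \<or> v = ((1), 0) \<or> v = ((- 1), (1))" for v by (simp add: Lst2_def)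
  have aR: "\<forall>v\<in>set (Lst2 z). closR z (Lst2 z) v"
  proof
    fix v assume "v \<in> set (Lst2 z)"
    then show "closR z (Lst2 z) v" using cR0 cR1 cR2 by (elim mem[elim_format] disjE) simp_all
  qed
  have aS: "\<forall>v\<in>set (Lst2 z). closS z (Lst2 z) v"
  proof
    fix v assume "v \<in> set (Lst2 z)"
    then show "closS z (Lst2 z) v" using cS0 cS1 cS2 by (elim mem[elim_format] disjE) simp_all
  qed
  show ?thesis
    by (rule finite_from_reps[OF z0 zn _ _ _ aR aS]) (simp_all add: Lst2_def)
qed

definition Lst3 :: "complex \<Rightarrow> (complex \<times> complex) list" where
  "Lst3 z = [(0, (1)), ((1), 0), ((z), (1)), ((- 1 - z), (1 + z))]"

lemma finite_n3:
  fixes z :: complex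
  assumes h: "(1 + z + (z^2)) = 0"
  shows "finite (Gq_at z)"
proof -
  have z0: "z \<noteq> 0" using h by (auto simp: power_0_left)
  have zn: "z^3 = 1" using h by Groebner_Basis.algebra
  have zz: "z * z^2 = 1" using zn by Groebner_Basis.algebra
  have iz: "inverse z = z^2" using zz by (rule inverse_unique)
  have cR0: "closR z (Lst3 z) (0, (1))"
    unfolding closR_def
  proof (rule bexI[of _ "(0, (1))"], rule exI[of _ 0], rule exI[of _ "1"], intro conjI)
    show "(1::complex) = 1 \<or> 1 = -1" by simp
    show "fR z (0, (1)) = sm (1 * z^0) (0, (1))"
      unfolding fR_def sm_def power_0 fst_conv snd_conv prod.inject
      by (rule conjI; ((simp add: algebra_simps power2_eq_square; fail) | Groebner_Basis.algebra | use h in Groebner_Basis.algebra))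
    show "(0, (1)) \<in> set (Lst3 z)" by (simp add: Lst3_def)
  qed
  have cS0: "closS z (Lst3 z) (0, (1))"
    unfolding closS_def
  proof (rule bexI[of _ "((1), 0)"], rule exI[of _ 0], rule exI[of _ "1"], intro conjI)
    show "(1::complex) = 1 \<or> 1 = -1" by simp
    show "fS z (0, (1)) = sm (1 * z^0) ((1), 0)"
      unfolding fS_def sm_def iz power_0 fst_conv snd_conv prod.inject
      by (rule conjI; ((simp add: algebra_simps power2_eq_square; fail) | Groebner_Basis.algebra | use h in Groebner_Basis.algebra))
    show "((1), 0) \<in> set (Lst3 z)" by (simp add: Lst3_def)
  qed
  have cR1: "closR z (Lst3 z) ((1), 0)"
    unfolding closR_def
  proof (rule bexI[of _ "((z), (1))"], rule exI[of _ 0], rule exI[of _ "1"], intro conjI)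
    show "(1::complex) = 1 \<or> 1 = -1" by simp
    show "fR z ((1), 0) = sm (1 * z^0) ((z), (1))"
      unfolding fR_def sm_def power_0 fst_conv snd_conv prod.inject
      by (rule conjI; ((simp add: algebra_simps power2_eq_square; fail) | Groebner_Basis.algebra | use h in Groebner_Basis.algebra))
    show "((z), (1)) \<in> set (Lst3 z)" by (simp add: Lst3_def)
  qed
  have cS1: "closS z (Lst3 z) ((1), 0)"
    unfolding closS_def
  proof (rule bexI[of _ "(0, (1))"], rule exI[of _ 2], rule exI[of _ "-1"], intro conjI)
    show "(-1::complex) = 1 \<or> -1 = -1" by simp
    show "fS z ((1), 0) = sm (-1 * z^2) (0, (1))"
      unfolding fS_def sm_def iz fst_conv snd_conv prod.inject
      by (rule conjI; ((simp add: algebra_simps power2_eq_square; fail) | Groebner_Basis.algebra | use h in Groebner_Basis.algebra))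
    show "(0, (1)) \<in> set (Lst3 z)" by (simp add: Lst3_def)
  qed
  have cR2: "closR z (Lst3 z) ((z), (1))"
    unfolding closR_def
  proof (rule bexI[of _ "((- 1 - z), (1 + z))"], rule exI[of _ 0], rule exI[of _ "1"], intro conjI)
    show "(1::complex) = 1 \<or> 1 = -1" by simp
    show "fR z ((z), (1)) = sm (1 * z^0) ((- 1 - z), (1 + z))"
      unfolding fR_def sm_def power_0 fst_conv snd_conv prod.inject
      by (rule conjI; ((simp add: algebra_simps power2_eq_square; fail) | Groebner_Basis.algebra | use h in Groebner_Basis.algebra))
    show "((- 1 - z), (1 + z)) \<in> set (Lst3 z)" by (simp add: Lst3_def)
  qed
  have cS2: "closS z (Lst3 z) ((z), (1))"
    unfolding closS_def
  proof (rule bexI[of _ "((- 1 - z), (1 + z))"], rule exI[of _ 1], rule exI[of _ "1"], intro conjI)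
    show "(1::complex) = 1 \<or> 1 = -1" by simp
    show "fS z ((z), (1)) = sm (1 * z^1) ((- 1 - z), (1 + z))"
      unfolding fS_def sm_def iz fst_conv snd_conv prod.inject
      by (rule conjI; ((simp add: algebra_simps power2_eq_square; fail) | Groebner_Basis.algebra | use h in Groebner_Basis.algebra))
    show "((- 1 - z), (1 + z)) \<in> set (Lst3 z)" by (simp add: Lst3_def)
  qed
  have cR3: "closR z (Lst3 z) ((- 1 - z), (1 + z))"
    unfolding closR_def
  proof (rule bexI[of _ "((1), 0)"], rule exI[of _ 0], rule exI[of _ "1"], intro conjI)
    show "(1::complex) = 1 \<or> 1 = -1" by simp
    show "fR z ((- 1 - z), (1 + z)) = sm (1 * z^0) ((1), 0)"
      unfolding fR_def sm_def power_0 fst_conv snd_conv prod.inject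
      by (rule conjI; ((simp add: algebra_simps power2_eq_square; fail) | Groebner_Basis.algebra | use h in Groebner_Basis.algebra))
    show "((1), 0) \<in> set (Lst3 z)" by (simp add: Lst3_def)
  qed
  have cS3: "closS z (Lst3 z) ((- 1 - z), (1 + z))"
    unfolding closS_def
  proof (rule bexI[of _ "((z), (1))"], rule exI[of _ 1], rule exI[of _ "-1"], intro conjI)
    show "(-1::complex) = 1 \<or> -1 = -1" by simp
    show "fS z ((- 1 - z), (1 + z)) = sm (-1 * z^1) ((z), (1))"
      unfolding fS_def sm_def iz fst_conv snd_conv prod.inject
      by (rule conjI; ((simp add: algebra_simps power2_eq_square; fail) | Groebner_Basis.algebra | use h in Groebner_Basis.algebra))
    show "((z), (1)) \<in> set (Lst3 z)" by (simp add: Lst3_def)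
  qed
  have mem: "v \<in> set (Lst3 z) \<Longrightarrow> v = (0, (1)) \<or> v = ((1), 0) \<or> v = ((z), (1)) \<or> v = ((- 1 - z), (1 + z))" for v by (simp add: Lst3_def)
  have aR: "\<forall>v\<in>set (Lst3 z). closR z (Lst3 z) v"
  proof
    fix v assume "v \<in> set (Lst3 z)"
    then show "closR z (Lst3 z) v" using cR0 cR1 cR2 cR3 by (elim mem[elim_format] disjE) simp_all
  qed
  have aS: "\<forall>v\<in>set (Lst3 z). closS z (Lst3 z) v"
  proof
    fix v assume "v \<in> set (Lst3 z)"
    then show "closS z (Lst3 z) v" using cS0 cS1 cS2 cS3 by (elim mem[elim_format] disjE) simp_all
  qed
  show ?thesis
    by (rule finite_from_reps[OF z0 zn _ _ _ aR aS]) (simp_all add: Lst3_def)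
qed

definition Lst4 :: "complex \<Rightarrow> (complex \<times> complex) list" where
  "Lst4 z = [(0, (1)), ((1), 0), ((z), (1)), ((- 1), (1 + z)), ((1), (- 1)), ((1 + z), (- z))]"

lemma finite_n4:
  fixes z :: complex
  assumes h: "(1 + (z^2)) = 0"
  shows "finite (Gq_at z)"
proof -
  have z0: "z \<noteq> 0" using h by (auto simp: power_0_left)
  have zn: "z^4 = 1" using h by Groebner_Basis.algebra
  have zz: "z * z^3 = 1" using zn by Groebner_Basis.algebra
  have iz: "inverse z = z^3" using zz by (rule inverse_unique)
  have cR0: "closR z (Lst4 z) (0, (1))"
    unfolding closR_def
  proof (rule bexI[of _ "(0, (1))"], rule exI[of _ 0], rule exI[of _ "1"], intro conjI)
    show "(1::complex) = 1 \<or> 1 = -1" by simp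
    show "fR z (0, (1)) = sm (1 * z^0) (0, (1))"
      unfolding fR_def sm_def power_0 fst_conv snd_conv prod.inject
      by (rule conjI; ((simp add: algebra_simps power2_eq_square; fail) | Groebner_Basis.algebra | use h in Groebner_Basis.algebra))
    show "(0, (1)) \<in> set (Lst4 z)" by (simp add: Lst4_def)
  qed
  have cS0: "closS z (Lst4 z) (0, (1))"
    unfolding closS_def
  proof (rule bexI[of _ "((1), 0)"], rule exI[of _ 0], rule exI[of _ "1"], intro conjI)
    show "(1::complex) = 1 \<or> 1 = -1" by simp
    show "fS z (0, (1)) = sm (1 * z^0) ((1), 0)"
      unfolding fS_def sm_def iz power_0 fst_conv snd_conv prod.inject
      by (rule conjI; ((simp add: algebra_simps power2_eq_square; fail) | Groebner_Basis.algebra | use h in Groebner_Basis.algebra))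
    show "((1), 0) \<in> set (Lst4 z)" by (simp add: Lst4_def)
  qed
  have cR1: "closR z (Lst4 z) ((1), 0)"
    unfolding closR_def
  proof (rule bexI[of _ "((z), (1))"], rule exI[of _ 0], rule exI[of _ "1"], intro conjI)
    show "(1::complex) = 1 \<or> 1 = -1" by simp
    show "fR z ((1), 0) = sm (1 * z^0) ((z), (1))"
      unfolding fR_def sm_def power_0 fst_conv snd_conv prod.inject
      by (rule conjI; ((simp add: algebra_simps power2_eq_square; fail) | Groebner_Basis.algebra | use h in Groebner_Basis.algebra))
    show "((z), (1)) \<in> set (Lst4 z)" by (simp add: Lst4_def)
  qed
  have cS1: "closS z (Lst4 z) ((1), 0)"
    unfolding closS_def
  proof (rule bexI[of _ "(0, (1))"], rule exI[of _ 1], rule exI[of _ "1"], intro conjI)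
    show "(1::complex) = 1 \<or> 1 = -1" by simp
    show "fS z ((1), 0) = sm (1 * z^1) (0, (1))"
      unfolding fS_def sm_def iz fst_conv snd_conv prod.inject
      by (rule conjI; ((simp add: algebra_simps power2_eq_square; fail) | Groebner_Basis.algebra | use h in Groebner_Basis.algebra))
    show "(0, (1)) \<in> set (Lst4 z)" by (simp add: Lst4_def)
  qed
  have cR2: "closR z (Lst4 z) ((z), (1))"
    unfolding closR_def
  proof (rule bexI[of _ "((- 1), (1 + z))"], rule exI[of _ 0], rule exI[of _ "1"], intro conjI)
    show "(1::complex) = 1 \<or> 1 = -1" by simp
    show "fR z ((z), (1)) = sm (1 * z^0) ((- 1), (1 + z))"
      unfolding fR_def sm_def power_0 fst_conv snd_conv prod.inject
      by (rule conjI; ((simp add: algebra_simps power2_eq_square; fail) | Groebner_Basis.algebra | use h in Groebner_Basis.algebra))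
    show "((- 1), (1 + z)) \<in> set (Lst4 z)" by (simp add: Lst4_def)
  qed
  have cS2: "closS z (Lst4 z) ((z), (1))"
    unfolding closS_def
  proof (rule bexI[of _ "((1), (- 1))"], rule exI[of _ 0], rule exI[of _ "1"], intro conjI)
    show "(1::complex) = 1 \<or> 1 = -1" by simp
    show "fS z ((z), (1)) = sm (1 * z^0) ((1), (- 1))"
      unfolding fS_def sm_def iz power_0 fst_conv snd_conv prod.inject
      by (rule conjI; ((simp add: algebra_simps power2_eq_square; fail) | Groebner_Basis.algebra | use h in Groebner_Basis.algebra))
    show "((1), (- 1)) \<in> set (Lst4 z)" by (simp add: Lst4_def)
  qed
  have cR3: "closR z (Lst4 z) ((- 1), (1 + z))"
    unfolding closR_def
  proof (rule bexI[of _ "((1), (- 1))"], rule exI[of _ 3], rule exI[of _ "1"], intro conjI)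
    show "(1::complex) = 1 \<or> 1 = -1" by simp
    show "fR z ((- 1), (1 + z)) = sm (1 * z^3) ((1), (- 1))"
      unfolding fR_def sm_def fst_conv snd_conv prod.inject
      by (rule conjI; ((simp add: algebra_simps power2_eq_square; fail) | Groebner_Basis.algebra | use h in Groebner_Basis.algebra))
    show "((1), (- 1)) \<in> set (Lst4 z)" by (simp add: Lst4_def)
  qed
  have cS3: "closS z (Lst4 z) ((- 1), (1 + z))"
    unfolding closS_def
  proof (rule bexI[of _ "((1 + z), (- z))"], rule exI[of _ 0], rule exI[of _ "1"], intro conjI)
    show "(1::complex) = 1 \<or> 1 = -1" by simp
    show "fS z ((- 1), (1 + z)) = sm (1 * z^0) ((1 + z), (- z))"
      unfolding fS_def sm_def iz power_0 fst_conv snd_conv prod.inject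
      by (rule conjI; ((simp add: algebra_simps power2_eq_square; fail) | Groebner_Basis.algebra | use h in Groebner_Basis.algebra))
    show "((1 + z), (- z)) \<in> set (Lst4 z)" by (simp add: Lst4_def)
  qed
  have cR4: "closR z (Lst4 z) ((1), (- 1))"
    unfolding closR_def
  proof (rule bexI[of _ "((1), 0)"], rule exI[of _ 1], rule exI[of _ "1"], intro conjI)
    show "(1::complex) = 1 \<or> 1 = -1" by simp
    show "fR z ((1), (- 1)) = sm (1 * z^1) ((1), 0)"
      unfolding fR_def sm_def fst_conv snd_conv prod.inject
      by (rule conjI; ((simp add: algebra_simps power2_eq_square; fail) | Groebner_Basis.algebra | use h in Groebner_Basis.algebra))
    show "((1), 0) \<in> set (Lst4 z)" by (simp add: Lst4_def)
  qed
  have cS4: "closS z (Lst4 z) ((1), (- 1))"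
    unfolding closS_def
  proof (rule bexI[of _ "((z), (1))"], rule exI[of _ 1], rule exI[of _ "1"], intro conjI)
    show "(1::complex) = 1 \<or> 1 = -1" by simp
    show "fS z ((1), (- 1)) = sm (1 * z^1) ((z), (1))"
      unfolding fS_def sm_def iz fst_conv snd_conv prod.inject
      by (rule conjI; ((simp add: algebra_simps power2_eq_square; fail) | Groebner_Basis.algebra | use h in Groebner_Basis.algebra))
    show "((z), (1)) \<in> set (Lst4 z)" by (simp add: Lst4_def)
  qed
  have cR5: "closR z (Lst4 z) ((1 + z), (- z))"
    unfolding closR_def
  proof (rule bexI[of _ "((1 + z), (- z))"], rule exI[of _ 1], rule exI[of _ "1"], intro conjI)
    show "(1::complex) = 1 \<or> 1 = -1" by simp
    show "fR z ((1 + z), (- z)) = sm (1 * z^1) ((1 + z), (- z))"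
      unfolding fR_def sm_def fst_conv snd_conv prod.inject
      by (rule conjI; ((simp add: algebra_simps power2_eq_square; fail) | Groebner_Basis.algebra | use h in Groebner_Basis.algebra))
    show "((1 + z), (- z)) \<in> set (Lst4 z)" by (simp add: Lst4_def)
  qed
  have cS5: "closS z (Lst4 z) ((1 + z), (- z))"
    unfolding closS_def
  proof (rule bexI[of _ "((- 1), (1 + z))"], rule exI[of _ 1], rule exI[of _ "1"], intro conjI)
    show "(1::complex) = 1 \<or> 1 = -1" by simp
    show "fS z ((1 + z), (- z)) = sm (1 * z^1) ((- 1), (1 + z))"
      unfolding fS_def sm_def iz fst_conv snd_conv prod.inject
      by (rule conjI; ((simp add: algebra_simps power2_eq_square; fail) | Groebner_Basis.algebra | use h in Groebner_Basis.algebra))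
    show "((- 1), (1 + z)) \<in> set (Lst4 z)" by (simp add: Lst4_def)
  qed
  have mem: "v \<in> set (Lst4 z) \<Longrightarrow> v = (0, (1)) \<or> v = ((1), 0) \<or> v = ((z), (1)) \<or> v = ((- 1), (1 + z)) \<or> v = ((1), (- 1)) \<or> v = ((1 + z), (- z))" for v by (simp add: Lst4_def)
  have aR: "\<forall>v\<in>set (Lst4 z). closR z (Lst4 z) v"
  proof
    fix v assume "v \<in> set (Lst4 z)"
    then show "closR z (Lst4 z) v" using cR0 cR1 cR2 cR3 cR4 cR5 by (elim mem[elim_format] disjE) simp_all
  qed
  have aS: "\<forall>v\<in>set (Lst4 z). closS z (Lst4 z) v"
  proof
    fix v assume "v \<in> set (Lst4 z)"
    then show "closS z (Lst4 z) v" using cS0 cS1 cS2 cS3 cS4 cS5 by (elim mem[elim_format] disjE) simp_all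
  qed
  show ?thesis
    by (rule finite_from_reps[OF z0 zn _ _ _ aR aS]) (simp_all add: Lst4_def)
qed

definition Lst5 :: "complex \<Rightarrow> (complex \<times> complex) list" where
  "Lst5 z = [(0, (1)), ((1), 0), ((z), (1)), (((z^2)), (1 + z)), ((1), (- 1)), (((z^3)), (1 + z + (z^2))), ((1 + z), (- z)), ((1 + z + (z^2)), (- (z^2))), ((z + (z^2) + (z^3)), (1 + z)), ((- 1 - z), (1 + 2 * z + (z^2) + (z^3))), ((1 + z), (- 1 - z - (z^2))), ((1 + 2 * z + (z^2) + (z^3)), (- z - (z^2) - (z^3)))]"

lemma finite_n5:
  fixes z :: complex
  assumes h: "(1 + z + (z^2) + (z^3) + (z^4)) = 0"
  shows "finite (Gq_at z)"
proof -
  have z0: "z \<noteq> 0" using h by (auto simp: power_0_left)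
  have zn: "z^5 = 1" using h by Groebner_Basis.algebra
  have zz: "z * z^4 = 1" using zn by Groebner_Basis.algebra
  have iz: "inverse z = z^4" using zz by (rule inverse_unique)
  have cR0: "closR z (Lst5 z) (0, (1))"
    unfolding closR_def
  proof (rule bexI[of _ "(0, (1))"], rule exI[of _ 0], rule exI[of _ "1"], intro conjI)
    show "(1::complex) = 1 \<or> 1 = -1" by simp
    show "fR z (0, (1)) = sm (1 * z^0) (0, (1))"
      unfolding fR_def sm_def power_0 fst_conv snd_conv prod.inject
      by (rule conjI; ((simp add: algebra_simps power2_eq_square; fail) | Groebner_Basis.algebra | use h in Groebner_Basis.algebra))
    show "(0, (1)) \<in> set (Lst5 z)" by (simp add: Lst5_def)
  qed
  have cS0: "closS z (Lst5 z) (0, (1))"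
    unfolding closS_def
  proof (rule bexI[of _ "((1), 0)"], rule exI[of _ 0], rule exI[of _ "1"], intro conjI)
    show "(1::complex) = 1 \<or> 1 = -1" by simp
    show "fS z (0, (1)) = sm (1 * z^0) ((1), 0)"
      unfolding fS_def sm_def iz power_0 fst_conv snd_conv prod.inject
      by (rule conjI; ((simp add: algebra_simps power2_eq_square; fail) | Groebner_Basis.algebra | use h in Groebner_Basis.algebra))
    show "((1), 0) \<in> set (Lst5 z)" by (simp add: Lst5_def)
  qed
  have cR1: "closR z (Lst5 z) ((1), 0)"
    unfolding closR_def
  proof (rule bexI[of _ "((z), (1))"], rule exI[of _ 0], rule exI[of _ "1"], intro conjI)
    show "(1::complex) = 1 \<or> 1 = -1" by simp
    show "fR z ((1), 0) = sm (1 * z^0) ((z), (1))"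
      unfolding fR_def sm_def power_0 fst_conv snd_conv prod.inject
      by (rule conjI; ((simp add: algebra_simps power2_eq_square; fail) | Groebner_Basis.algebra | use h in Groebner_Basis.algebra))
    show "((z), (1)) \<in> set (Lst5 z)" by (simp add: Lst5_def)
  qed
  have cS1: "closS z (Lst5 z) ((1), 0)"
    unfolding closS_def
  proof (rule bexI[of _ "(0, (1))"], rule exI[of _ 4], rule exI[of _ "-1"], intro conjI)
    show "(-1::complex) = 1 \<or> -1 = -1" by simp
    show "fS z ((1), 0) = sm (-1 * z^4) (0, (1))"
      unfolding fS_def sm_def iz fst_conv snd_conv prod.inject
      by (rule conjI; ((simp add: algebra_simps power2_eq_square; fail) | Groebner_Basis.algebra | use h in Groebner_Basis.algebra))
    show "(0, (1)) \<in> set (Lst5 z)" by (simp add: Lst5_def)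
  qed
  have cR2: "closR z (Lst5 z) ((z), (1))"
    unfolding closR_def
  proof (rule bexI[of _ "(((z^2)), (1 + z))"], rule exI[of _ 0], rule exI[of _ "1"], intro conjI)
    show "(1::complex) = 1 \<or> 1 = -1" by simp
    show "fR z ((z), (1)) = sm (1 * z^0) (((z^2)), (1 + z))"
      unfolding fR_def sm_def power_0 fst_conv snd_conv prod.inject
      by (rule conjI; ((simp add: algebra_simps power2_eq_square; fail) | Groebner_Basis.algebra | use h in Groebner_Basis.algebra))
    show "(((z^2)), (1 + z)) \<in> set (Lst5 z)" by (simp add: Lst5_def)
  qed
  have cS2: "closS z (Lst5 z) ((z), (1))"
    unfolding closS_def
  proof (rule bexI[of _ "((1), (- 1))"], rule exI[of _ 0], rule exI[of _ "1"], intro conjI)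
    show "(1::complex) = 1 \<or> 1 = -1" by simp
    show "fS z ((z), (1)) = sm (1 * z^0) ((1), (- 1))"
      unfolding fS_def sm_def iz power_0 fst_conv snd_conv prod.inject
      by (rule conjI; ((simp add: algebra_simps power2_eq_square; fail) | Groebner_Basis.algebra | use h in Groebner_Basis.algebra))
    show "((1), (- 1)) \<in> set (Lst5 z)" by (simp add: Lst5_def)
  qed
  have cR3: "closR z (Lst5 z) (((z^2)), (1 + z))"
    unfolding closR_def
  proof (rule bexI[of _ "(((z^3)), (1 + z + (z^2)))"], rule exI[of _ 0], rule exI[of _ "1"], intro conjI)
    show "(1::complex) = 1 \<or> 1 = -1" by simp
    show "fR z (((z^2)), (1 + z)) = sm (1 * z^0) (((z^3)), (1 + z + (z^2)))"
      unfolding fR_def sm_def power_0 fst_conv snd_conv prod.inject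
      by (rule conjI; ((simp add: algebra_simps power2_eq_square; fail) | Groebner_Basis.algebra | use h in Groebner_Basis.algebra))
    show "(((z^3)), (1 + z + (z^2))) \<in> set (Lst5 z)" by (simp add: Lst5_def)
  qed
  have cS3: "closS z (Lst5 z) (((z^2)), (1 + z))"
    unfolding closS_def
  proof (rule bexI[of _ "((1 + z), (- z))"], rule exI[of _ 0], rule exI[of _ "1"], intro conjI)
    show "(1::complex) = 1 \<or> 1 = -1" by simp
    show "fS z (((z^2)), (1 + z)) = sm (1 * z^0) ((1 + z), (- z))"
      unfolding fS_def sm_def iz power_0 fst_conv snd_conv prod.inject
      by (rule conjI; ((simp add: algebra_simps power2_eq_square; fail) | Groebner_Basis.algebra | use h in Groebner_Basis.algebra))
    show "((1 + z), (- z)) \<in> set (Lst5 z)" by (simp add: Lst5_def)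
  qed
  have cR4: "closR z (Lst5 z) ((1), (- 1))"
    unfolding closR_def
  proof (rule bexI[of _ "((1), 0)"], rule exI[of _ 1], rule exI[of _ "1"], intro conjI)
    show "(1::complex) = 1 \<or> 1 = -1" by simp
    show "fR z ((1), (- 1)) = sm (1 * z^1) ((1), 0)"
      unfolding fR_def sm_def fst_conv snd_conv prod.inject
      by (rule conjI; ((simp add: algebra_simps power2_eq_square; fail) | Groebner_Basis.algebra | use h in Groebner_Basis.algebra))
    show "((1), 0) \<in> set (Lst5 z)" by (simp add: Lst5_def)
  qed
  have cS4: "closS z (Lst5 z) ((1), (- 1))"
    unfolding closS_def
  proof (rule bexI[of _ "((z), (1))"], rule exI[of _ 4], rule exI[of _ "-1"], intro conjI)
    show "(-1::complex) = 1 \<or> -1 = -1" by simp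
    show "fS z ((1), (- 1)) = sm (-1 * z^4) ((z), (1))"
      unfolding fS_def sm_def iz fst_conv snd_conv prod.inject
      by (rule conjI; ((simp add: algebra_simps power2_eq_square; fail) | Groebner_Basis.algebra | use h in Groebner_Basis.algebra))
    show "((z), (1)) \<in> set (Lst5 z)" by (simp add: Lst5_def)
  qed
  have cR5: "closR z (Lst5 z) (((z^3)), (1 + z + (z^2)))"
    unfolding closR_def
  proof (rule bexI[of _ "((1), (- 1))"], rule exI[of _ 4], rule exI[of _ "1"], intro conjI)
    show "(1::complex) = 1 \<or> 1 = -1" by simp
    show "fR z (((z^3)), (1 + z + (z^2))) = sm (1 * z^4) ((1), (- 1))"
      unfolding fR_def sm_def fst_conv snd_conv prod.inject
      by (rule conjI; ((simp add: algebra_simps power2_eq_square; fail) | Groebner_Basis.algebra | use h in Groebner_Basis.algebra))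
    show "((1), (- 1)) \<in> set (Lst5 z)" by (simp add: Lst5_def)
  qed
  have cS5: "closS z (Lst5 z) (((z^3)), (1 + z + (z^2)))"
    unfolding closS_def
  proof (rule bexI[of _ "((1 + z + (z^2)), (- (z^2)))"], rule exI[of _ 0], rule exI[of _ "1"], intro conjI)
    show "(1::complex) = 1 \<or> 1 = -1" by simp
    show "fS z (((z^3)), (1 + z + (z^2))) = sm (1 * z^0) ((1 + z + (z^2)), (- (z^2)))"
      unfolding fS_def sm_def iz power_0 fst_conv snd_conv prod.inject
      by (rule conjI; ((simp add: algebra_simps power2_eq_square; fail) | Groebner_Basis.algebra | use h in Groebner_Basis.algebra))
    show "((1 + z + (z^2)), (- (z^2))) \<in> set (Lst5 z)" by (simp add: Lst5_def)
  qed
  have cR6: "closR z (Lst5 z) ((1 + z), (- z))"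
    unfolding closR_def
  proof (rule bexI[of _ "((1 + z + (z^2)), (- (z^2)))"], rule exI[of _ 3], rule exI[of _ "-1"], intro conjI)
    show "(-1::complex) = 1 \<or> -1 = -1" by simp
    show "fR z ((1 + z), (- z)) = sm (-1 * z^3) ((1 + z + (z^2)), (- (z^2)))"
      unfolding fR_def sm_def fst_conv snd_conv prod.inject
      by (rule conjI; ((simp add: algebra_simps power2_eq_square; fail) | Groebner_Basis.algebra | use h in Groebner_Basis.algebra))
    show "((1 + z + (z^2)), (- (z^2))) \<in> set (Lst5 z)" by (simp add: Lst5_def)
  qed
  have cS6: "closS z (Lst5 z) ((1 + z), (- z))"
    unfolding closS_def
  proof (rule bexI[of _ "(((z^2)), (1 + z))"], rule exI[of _ 4], rule exI[of _ "-1"], intro conjI)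
    show "(-1::complex) = 1 \<or> -1 = -1" by simp
    show "fS z ((1 + z), (- z)) = sm (-1 * z^4) (((z^2)), (1 + z))"
      unfolding fS_def sm_def iz fst_conv snd_conv prod.inject
      by (rule conjI; ((simp add: algebra_simps power2_eq_square; fail) | Groebner_Basis.algebra | use h in Groebner_Basis.algebra))
    show "(((z^2)), (1 + z)) \<in> set (Lst5 z)" by (simp add: Lst5_def)
  qed
  have cR7: "closR z (Lst5 z) ((1 + z + (z^2)), (- (z^2)))"
    unfolding closR_def
  proof (rule bexI[of _ "((z + (z^2) + (z^3)), (1 + z))"], rule exI[of _ 0], rule exI[of _ "1"], intro conjI)
    show "(1::complex) = 1 \<or> 1 = -1" by simp
    show "fR z ((1 + z + (z^2)), (- (z^2))) = sm (1 * z^0) ((z + (z^2) + (z^3)), (1 + z))"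
      unfolding fR_def sm_def power_0 fst_conv snd_conv prod.inject
      by (rule conjI; ((simp add: algebra_simps power2_eq_square; fail) | Groebner_Basis.algebra | use h in Groebner_Basis.algebra))
    show "((z + (z^2) + (z^3)), (1 + z)) \<in> set (Lst5 z)" by (simp add: Lst5_def)
  qed
  have cS7: "closS z (Lst5 z) ((1 + z + (z^2)), (- (z^2)))"
    unfolding closS_def
  proof (rule bexI[of _ "(((z^3)), (1 + z + (z^2)))"], rule exI[of _ 4], rule exI[of _ "-1"], intro conjI)
    show "(-1::complex) = 1 \<or> -1 = -1" by simp
    show "fS z ((1 + z + (z^2)), (- (z^2))) = sm (-1 * z^4) (((z^3)), (1 + z + (z^2)))"
      unfolding fS_def sm_def iz fst_conv snd_conv prod.inject
      by (rule conjI; ((simp add: algebra_simps power2_eq_square; fail) | Groebner_Basis.algebra | use h in Groebner_Basis.algebra))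
    show "(((z^3)), (1 + z + (z^2))) \<in> set (Lst5 z)" by (simp add: Lst5_def)
  qed
  have cR8: "closR z (Lst5 z) ((z + (z^2) + (z^3)), (1 + z))"
    unfolding closR_def
  proof (rule bexI[of _ "((- 1 - z), (1 + 2 * z + (z^2) + (z^3)))"], rule exI[of _ 0], rule exI[of _ "1"], intro conjI)
    show "(1::complex) = 1 \<or> 1 = -1" by simp
    show "fR z ((z + (z^2) + (z^3)), (1 + z)) = sm (1 * z^0) ((- 1 - z), (1 + 2 * z + (z^2) + (z^3)))"
      unfolding fR_def sm_def power_0 fst_conv snd_conv prod.inject
      by (rule conjI; ((simp add: algebra_simps power2_eq_square; fail) | Groebner_Basis.algebra | use h in Groebner_Basis.algebra))
    show "((- 1 - z), (1 + 2 * z + (z^2) + (z^3))) \<in> set (Lst5 z)" by (simp add: Lst5_def)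
  qed
  have cS8: "closS z (Lst5 z) ((z + (z^2) + (z^3)), (1 + z))"
    unfolding closS_def
  proof (rule bexI[of _ "((1 + z), (- 1 - z - (z^2)))"], rule exI[of _ 0], rule exI[of _ "1"], intro conjI)
    show "(1::complex) = 1 \<or> 1 = -1" by simp
    show "fS z ((z + (z^2) + (z^3)), (1 + z)) = sm (1 * z^0) ((1 + z), (- 1 - z - (z^2)))"
      unfolding fS_def sm_def iz power_0 fst_conv snd_conv prod.inject
      by (rule conjI; ((simp add: algebra_simps power2_eq_square; fail) | Groebner_Basis.algebra | use h in Groebner_Basis.algebra))
    show "((1 + z), (- 1 - z - (z^2))) \<in> set (Lst5 z)" by (simp add: Lst5_def)
  qed
  have cR9: "closR z (Lst5 z) ((- 1 - z), (1 + 2 * z + (z^2) + (z^3)))"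
    unfolding closR_def
  proof (rule bexI[of _ "((1 + z), (- 1 - z - (z^2)))"], rule exI[of _ 1], rule exI[of _ "-1"], intro conjI)
    show "(-1::complex) = 1 \<or> -1 = -1" by simp
    show "fR z ((- 1 - z), (1 + 2 * z + (z^2) + (z^3))) = sm (-1 * z^1) ((1 + z), (- 1 - z - (z^2)))"
      unfolding fR_def sm_def fst_conv snd_conv prod.inject
      by (rule conjI; ((simp add: algebra_simps power2_eq_square; fail) | Groebner_Basis.algebra | use h in Groebner_Basis.algebra))
    show "((1 + z), (- 1 - z - (z^2))) \<in> set (Lst5 z)" by (simp add: Lst5_def)
  qed
  have cS9: "closS z (Lst5 z) ((- 1 - z), (1 + 2 * z + (z^2) + (z^3)))"
    unfolding closS_def
  proof (rule bexI[of _ "((1 + 2 * z + (z^2) + (z^3)), (- z - (z^2) - (z^3)))"], rule exI[of _ 0], rule exI[of _ "1"], intro conjI)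
    show "(1::complex) = 1 \<or> 1 = -1" by simp
    show "fS z ((- 1 - z), (1 + 2 * z + (z^2) + (z^3))) = sm (1 * z^0) ((1 + 2 * z + (z^2) + (z^3)), (- z - (z^2) - (z^3)))"
      unfolding fS_def sm_def iz power_0 fst_conv snd_conv prod.inject
      by (rule conjI; ((simp add: algebra_simps power2_eq_square; fail) | Groebner_Basis.algebra | use h in Groebner_Basis.algebra))
    show "((1 + 2 * z + (z^2) + (z^3)), (- z - (z^2) - (z^3))) \<in> set (Lst5 z)" by (simp add: Lst5_def)
  qed
  have cR10: "closR z (Lst5 z) ((1 + z), (- 1 - z - (z^2)))"
    unfolding closR_def
  proof (rule bexI[of _ "((1 + z), (- z))"], rule exI[of _ 1], rule exI[of _ "1"], intro conjI)
    show "(1::complex) = 1 \<or> 1 = -1" by simp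
    show "fR z ((1 + z), (- 1 - z - (z^2))) = sm (1 * z^1) ((1 + z), (- z))"
      unfolding fR_def sm_def fst_conv snd_conv prod.inject
      by (rule conjI; ((simp add: algebra_simps power2_eq_square; fail) | Groebner_Basis.algebra | use h in Groebner_Basis.algebra))
    show "((1 + z), (- z)) \<in> set (Lst5 z)" by (simp add: Lst5_def)
  qed
  have cS10: "closS z (Lst5 z) ((1 + z), (- 1 - z - (z^2)))"
    unfolding closS_def
  proof (rule bexI[of _ "((z + (z^2) + (z^3)), (1 + z))"], rule exI[of _ 4], rule exI[of _ "-1"], intro conjI)
    show "(-1::complex) = 1 \<or> -1 = -1" by simp
    show "fS z ((1 + z), (- 1 - z - (z^2))) = sm (-1 * z^4) ((z + (z^2) + (z^3)), (1 + z))"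
      unfolding fS_def sm_def iz fst_conv snd_conv prod.inject
      by (rule conjI; ((simp add: algebra_simps power2_eq_square; fail) | Groebner_Basis.algebra | use h in Groebner_Basis.algebra))
    show "((z + (z^2) + (z^3)), (1 + z)) \<in> set (Lst5 z)" by (simp add: Lst5_def)
  qed
  have cR11: "closR z (Lst5 z) ((1 + 2 * z + (z^2) + (z^3)), (- z - (z^2) - (z^3)))"
    unfolding closR_def
  proof (rule bexI[of _ "((1 + 2 * z + (z^2) + (z^3)), (- z - (z^2) - (z^3)))"], rule exI[of _ 1], rule exI[of _ "1"], intro conjI)
    show "(1::complex) = 1 \<or> 1 = -1" by simp
    show "fR z ((1 + 2 * z + (z^2) + (z^3)), (- z - (z^2) - (z^3))) = sm (1 * z^1) ((1 + 2 * z + (z^2) + (z^3)), (- z - (z^2) - (z^3)))"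
      unfolding fR_def sm_def fst_conv snd_conv prod.inject
      by (rule conjI; ((simp add: algebra_simps power2_eq_square; fail) | Groebner_Basis.algebra | use h in Groebner_Basis.algebra))
    show "((1 + 2 * z + (z^2) + (z^3)), (- z - (z^2) - (z^3))) \<in> set (Lst5 z)" by (simp add: Lst5_def)
  qed
  have cS11: "closS z (Lst5 z) ((1 + 2 * z + (z^2) + (z^3)), (- z - (z^2) - (z^3)))"
    unfolding closS_def
  proof (rule bexI[of _ "((- 1 - z), (1 + 2 * z + (z^2) + (z^3)))"], rule exI[of _ 4], rule exI[of _ "-1"], intro conjI)
    show "(-1::complex) = 1 \<or> -1 = -1" by simp
    show "fS z ((1 + 2 * z + (z^2) + (z^3)), (- z - (z^2) - (z^3))) = sm (-1 * z^4) ((- 1 - z), (1 + 2 * z + (z^2) + (z^3)))"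
      unfolding fS_def sm_def iz fst_conv snd_conv prod.inject
      by (rule conjI; ((simp add: algebra_simps power2_eq_square; fail) | Groebner_Basis.algebra | use h in Groebner_Basis.algebra))
    show "((- 1 - z), (1 + 2 * z + (z^2) + (z^3))) \<in> set (Lst5 z)" by (simp add: Lst5_def)
  qed
  have mem: "v \<in> set (Lst5 z) \<Longrightarrow> v = (0, (1)) \<or> v = ((1), 0) \<or> v = ((z), (1)) \<or> v = (((z^2)), (1 + z)) \<or> v = ((1), (- 1)) \<or> v = (((z^3)), (1 + z + (z^2))) \<or> v = ((1 + z), (- z)) \<or> v = ((1 + z + (z^2)), (- (z^2))) \<or> v = ((z + (z^2) + (z^3)), (1 + z)) \<or> v = ((- 1 - z), (1 + 2 * z + (z^2) + (z^3))) \<or> v = ((1 + z), (- 1 - z - (z^2))) \<or> v = ((1 + 2 * z + (z^2) + (z^3)), (- z - (z^2) - (z^3)))" for v by (simp add: Lst5_def)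
  have aR: "\<forall>v\<in>set (Lst5 z). closR z (Lst5 z) v"
  proof
    fix v assume "v \<in> set (Lst5 z)"
    then show "closR z (Lst5 z) v" using cR0 cR1 cR2 cR3 cR4 cR5 cR6 cR7 cR8 cR9 cR10 cR11 by (elim mem[elim_format] disjE) simp_all
  qed
  have aS: "\<forall>v\<in>set (Lst5 z). closS z (Lst5 z) v"
  proof
    fix v assume "v \<in> set (Lst5 z)"
    then show "closS z (Lst5 z) v" using cS0 cS1 cS2 cS3 cS4 cS5 cS6 cS7 cS8 cS9 cS10 cS11 by (elim mem[elim_format] disjE) simp_all
  qed
  show ?thesis
    by (rule finite_from_reps[OF z0 zn _ _ _ aR aS]) (simp_all add: Lst5_def)
qed




definition laur :: "(complex \<Rightarrow> complex) \<Rightarrow> bool" where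
  "laur \<phi> \<longleftrightarrow> (\<exists>P::int poly. \<exists>e::nat. \<forall>q. q \<noteq> 0 \<longrightarrow> \<phi> q = poly (of_int_poly P) q / q^e)"

lemma laur_cong:
  assumes "laur \<phi>" "\<And>q. q \<noteq> 0 \<Longrightarrow> \<phi> q = \<psi> q"
  shows "laur \<psi>"
proof -
  obtain P e where P: "\<forall>q. q \<noteq> 0 \<longrightarrow> \<phi> q = poly (of_int_poly P) q / q^e" using assms(1) laur_def by auto
  have "\<forall>q. q \<noteq> 0 \<longrightarrow> \<psi> q = poly (of_int_poly P) q / q^e" using P assms(2) by auto
  then show ?thesis unfolding laur_def by blast
qed

lemma laur_const: "laur (\<lambda>q. of_int c)"
  unfolding laur_def by (rule exI[of _ "[:c:]"], rule exI[of _ 0]) (cases "c = 0"; simp add: map_poly_pCons)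

lemma laur_zero: "laur (\<lambda>q. 0)" using laur_const[of 0] by simp
lemma laur_one: "laur (\<lambda>q. 1)" using laur_const[of 1] by simp

lemma laur_id: "laur (\<lambda>q. q)"
  unfolding laur_def by (rule exI[of _ "[:0,1:]"], rule exI[of _ 0]) simp

lemma laur_inv: "laur (\<lambda>q. inverse q)"
  unfolding laur_def by (rule exI[of _ 1], rule exI[of _ 1]) (simp add: field_simps)

lemma laur_add:
  assumes "laur \<phi>" "laur \<psi>"
  shows "laur (\<lambda>q. \<phi> q + \<psi> q)"
proof -
  obtain P e where P: "\<forall>q. q \<noteq> 0 \<longrightarrow> \<phi> q = poly (of_int_poly P) q / q^e" using assms(1) laur_def by auto
  obtain Q f where Q: "\<forall>q. q \<noteq> 0 \<longrightarrow> \<psi> q = poly (of_int_poly Q) q / q^f" using assms(2) laur_def by auto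
  show ?thesis unfolding laur_def
  proof (rule exI[of _ "P * [:0,1:]^f + Q * [:0,1:]^e"], rule exI[of _ "e + f"], intro allI impI)
    fix q :: complex assume q: "q \<noteq> 0"
    show "\<phi> q + \<psi> q = poly (of_int_poly (P * [:0,1:]^f + Q * [:0,1:]^e)) q / q^(e+f)"
      using P Q q by (simp add: hom_distribs field_simps power_add)
  qed
qed

lemma laur_mult:
  assumes "laur \<phi>" "laur \<psi>"
  shows "laur (\<lambda>q. \<phi> q * \<psi> q)"
proof -
  obtain P e where P: "\<forall>q. q \<noteq> 0 \<longrightarrow> \<phi> q = poly (of_int_poly P) q / q^e" using assms(1) laur_def by auto
  obtain Q f where Q: "\<forall>q. q \<noteq> 0 \<longrightarrow> \<psi> q = poly (of_int_poly Q) q / q^f" using assms(2) laur_def by auto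
  show ?thesis unfolding laur_def
  proof (rule exI[of _ "P * Q"], rule exI[of _ "e + f"], intro allI impI)
    fix q :: complex assume q: "q \<noteq> 0"
    show "\<phi> q * \<psi> q = poly (of_int_poly (P * Q)) q / q^(e+f)"
      using P Q q by (simp add: hom_distribs field_simps power_add)
  qed
qed

lemma laur_uminus: "laur \<phi> \<Longrightarrow> laur (\<lambda>q. - \<phi> q)"
proof -
  assume "laur \<phi>"
  then have "laur (\<lambda>q. of_int (-1) * \<phi> q)" by (rule laur_mult[OF laur_const])
  then show ?thesis by (rule laur_cong) simp
qed

lemma laur_diff: "laur \<phi> \<Longrightarrow> laur \<psi> \<Longrightarrow> laur (\<lambda>q. \<phi> q - \<psi> q)"
proof -
  assume a: "laur \<phi>" "laur \<psi>"
  have "laur (\<lambda>q. \<phi> q + - \<psi> q)" by (rule laur_add[OF a(1) laur_uminus[OF a(2)]])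
  then show ?thesis by (rule laur_cong) simp
qed

lemma laur_transfer:
  assumes "laur \<phi>" and z0: "z \<noteq> 0" and w0: "w \<noteq> 0"
    and tr: "\<forall>P. poly (of_int_poly P) z = 0 \<longrightarrow> poly (of_int_poly P) w = 0"
    and "\<phi> z = 0"
  shows "\<phi> w = 0"
proof -
  obtain P e where P: "\<forall>q. q \<noteq> 0 \<longrightarrow> \<phi> q = poly (of_int_poly P) q / q^e" using assms(1) laur_def by auto
  have "poly (of_int_poly P) z = 0" using P z0 assms(5) by simp
  then have "poly (of_int_poly P) w = 0" using tr by blast
  then show ?thesis using P w0 by simp
qed

lemma laur_prod:
  fixes M A :: "complex \<Rightarrow> complex^2^2"
  assumes M: "\<forall>i j. laur (\<lambda>q. M q $ i $ j)" and A: "\<forall>i j. laur (\<lambda>q. A q $ i $ j)"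
  shows "laur (\<lambda>q. (M q ** A q) $ i $ j)"
proof -
  have "laur (\<lambda>q. M q $ i $ 1 * A q $ 1 $ j + M q $ i $ 2 * A q $ 2 $ j)"
    by (rule laur_add; rule laur_mult) (rule M[rule_format] A[rule_format])+
  then show ?thesis unfolding mult_entry .
qed

lemma laur_R: "\<forall>(i::2) (j::2). laur (\<lambda>q. Rq q $ i $ j)"
  by (simp add: forall_2 laur_id laur_one laur_zero)
lemma laur_S: "\<forall>(i::2) (j::2). laur (\<lambda>q. Sq q $ i $ j)"
  by (simp add: forall_2 laur_one laur_zero laur_uminus laur_inv)
lemma laur_Rinv: "\<forall>(i::2) (j::2). laur (\<lambda>q. matrix_inv (Rq q) $ i $ j)"
proof -
  have h: "\<forall>(i::2) (j::2). laur (\<lambda>q. RinvM q $ i $ j)"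
    by (simp add: forall_2 laur_one laur_zero laur_uminus laur_inv)
  show ?thesis
  proof (intro allI)
    fix i j :: 2
    show "laur (\<lambda>q. matrix_inv (Rq q) $ i $ j)" by (rule laur_cong[OF h[rule_format]]) (simp add: Rinv_eq)
  qed
qed
lemma laur_Sinv: "\<forall>(i::2) (j::2). laur (\<lambda>q. matrix_inv (Sq q) $ i $ j)"
proof -
  have h: "\<forall>(i::2) (j::2). laur (\<lambda>q. SinvM q $ i $ j)"
    by (simp add: forall_2 laur_one laur_zero laur_uminus laur_id)
  show ?thesis
  proof (intro allI)
    fix i j :: 2
    show "laur (\<lambda>q. matrix_inv (Sq q) $ i $ j)" by (rule laur_cong[OF h[rule_format]]) (simp add: Sinv_eq)
  qed
qed

lemma Gq_laur: "(M :: complex \<Rightarrow> complex^2^2) \<in> Gq \<Longrightarrow> \<forall>i j. laur (\<lambda>q. M q $ i $ j)"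
proof (induct rule: Gq.induct)
  case one
  show ?case by (simp add: forall_2 laur_one laur_zero)
next
  case (mulR M) then show ?case using laur_prod[OF _ laur_R] by blast
next
  case (mulS M) then show ?case using laur_prod[OF _ laur_S] by blast
next
  case (mulRinv M) then show ?case using laur_prod[OF _ laur_Rinv] by blast
next
  case (mulSinv M) then show ?case using laur_prod[OF _ laur_Sinv] by blast
qed

lemma transfer_finite:
  fixes z w :: complex
  assumes z0: "z \<noteq> 0" and w0: "w \<noteq> 0"
    and tr: "\<forall>P. poly (of_int_poly P) z = 0 \<longrightarrow> poly (of_int_poly P) w = 0"
    and fin: "finite (Gq_at z)"
  shows "finite (Gq_at w)"
proof -
  define g where "g A = (SOME M. M \<in> Gq \<and> M z = A) w" for A
  have "Gq_at w \<subseteq> g ` Gq_at z"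
  proof
    fix B assume "B \<in> Gq_at w"
    then obtain M where M: "M \<in> Gq" "B = M w" unfolding Gq_at_def by blast
    define M' where "M' = (SOME M'. M' \<in> Gq \<and> M' z = M z)"
    have M': "M' \<in> Gq \<and> M' z = M z" unfolding M'_def by (rule someI[of _ M]) (simp add: M(1))
    have "M' w = M w"
    proof (rule mat2_eqI)
      have L: "laur (\<lambda>q. M' q $ i $ j - M q $ i $ j)" for i j :: 2
        using laur_diff Gq_laur M'[THEN conjunct1] M(1) by blast
      have E: "M' w $ i $ j - M w $ i $ j = 0" for i j :: 2
        by (rule laur_transfer[OF L z0 w0 tr, of i j]) (use M' in simp)
      show "M' w $ 1 $ 1 = M w $ 1 $ 1" using E[of 1 1] by simp
      show "M' w $ 1 $ 2 = M w $ 1 $ 2" using E[of 1 2] by simp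
      show "M' w $ 2 $ 1 = M w $ 2 $ 1" using E[of 2 1] by simp
      show "M' w $ 2 $ 2 = M w $ 2 $ 2" using E[of 2 2] by simp
    qed
    moreover have "g (M z) = M' w" unfolding g_def M'_def by simp
    moreover have "M z \<in> Gq_at z" unfolding Gq_at_def using M(1) by blast
    ultimately show "B \<in> g ` Gq_at z" using M(2) by force
  qed
  then show ?thesis using fin finite_subset by blast
qed


lemma primitive_unique_order:
  assumes "primitive_root_of_unity n z" 
  shows "n = (LEAST k. 0 < k \<and> z^k = 1)"
proof (rule Least_equality[symmetric])
  show "0 < n \<and> z^n = 1" using assms unfolding primitive_root_of_unity_def by blast
  fix k assume "0 < k \<and> z^k = 1"
  then show "n \<le> k" using assms unfolding primitive_root_of_unity_def by (meson not_le)
qed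

lemma finite_if_primitive:
  fixes z :: complex
  assumes "n \<in> {2,3,4,5}" "primitive_root_of_unity n z"
  shows "finite (Gq_at z)"
proof -
  have zn: "z^n = 1" and nz: "\<And>k. 0 < k \<Longrightarrow> k < n \<Longrightarrow> z^k \<noteq> 1"
    using assms(2) unfolding primitive_root_of_unity_def by auto
  consider "n = 2" | "n = 3" | "n = 4" | "n = 5" using assms(1) by blast
  then show ?thesis
  proof cases
    case 1
    have "z \<noteq> 1" using nz[of 1] 1 by simp
    moreover have "(z - 1) * (1 + z) = 0"
    proof -
      have "z^2 = 1" using zn 1 by simp
      then show ?thesis by Groebner_Basis.algebra
    qed
    ultimately have "1 + z = 0" by simp
    then show ?thesis by (rule finite_n2)
  next
    case 2
    have "z \<noteq> 1" using nz[of 1] 2 by simp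
    moreover have "(z - 1) * (1 + z + (z^2)) = 0"
    proof -
      have "z^3 = 1" using zn 2 by simp
      then show ?thesis by Groebner_Basis.algebra
    qed
    ultimately have "1 + z + (z^2) = 0" by simp
    then show ?thesis by (rule finite_n3)
  next
    case 3
    have "z^2 \<noteq> 1" using nz[of 2] 3 by simp
    moreover have "(z^2 - 1) * (1 + (z^2)) = 0"
    proof -
      have "z^4 = 1" using zn 3 by simp
      then show ?thesis by Groebner_Basis.algebra
    qed
    ultimately have "1 + (z^2) = 0" by simp
    then show ?thesis by (rule finite_n4)
  next
    case 4
    have "z \<noteq> 1" using nz[of 1] 4 by simp
    moreover have "(z - 1) * (1 + z + (z^2) + (z^3) + (z^4)) = 0"
    proof -
      have "z^5 = 1" using zn 4 by simp
      then show ?thesis by Groebner_Basis.algebra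
    qed
    ultimately have "1 + z + (z^2) + (z^3) + (z^4) = 0" by simp
    then show ?thesis by (rule finite_n5)
  qed
qed

lemma infinite_order_ge6:
  fixes z :: complex
  assumes prim: "primitive_root_of_unity n z" and n6: "n \<ge> 6" and fin: "finite (Gq_at z)"
  shows False
proof -
  have n0: "n > 0" using n6 by simp
  have zn: "z^n = 1" and nz: "\<And>k. 0 < k \<Longrightarrow> k < n \<Longrightarrow> z^k \<noteq> 1"
    using prim unfolding primitive_root_of_unity_def by auto
  define \<omega> where "\<omega> = cis (2 * pi / real n)"
  have \<omega>k: "cis (2 * pi * real k / real n) = \<omega>^k" for k
  proof -
    have "\<omega>^k = cis (real k * (2 * pi / real n))" unfolding \<omega>_def by (rule Complex.DeMoivre)
    also have "real k * (2 * pi / real n) = 2 * pi * real k / real n" by simp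
    finally show ?thesis by simp
  qed
  have \<omega>n: "\<omega>^n = 1" using \<omega>k[of n] n0 by simp
  have "z \<in> {z. z^n = 1}" using zn by simp
  then obtain k where k: "k < n" "z = \<omega>^k"
    using Complex.bij_betw_roots_unity[OF n0] \<omega>k unfolding bij_betw_def by auto
  have cop: "algebraic_semidom_class.coprime k n"
  proof (rule ccontr)
    assume nc: "\<not> algebraic_semidom_class.coprime k n"
    define d where "d = gcd k n"
    have d1: "d \<noteq> 1" using nc unfolding d_def by (simp add: coprime_iff_gcd_eq_1)
    have d0: "d > 0" using n0 unfolding d_def by simp
    have dn: "d dvd n" "d dvd k" unfolding d_def by simp_all
    obtain n' where n': "n = d * n'" using dn(1) by (rule dvdE)
    obtain k' where k': "k = d * k'" using dn(2) by (rule dvdE)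
    have n'0: "n' > 0" using n0 n' by (cases n') auto
    have "n' < n" using n' d0 d1 n'0 by (cases d) auto 
    moreover have "z^n' = 1"
    proof -
      have "z^n' = \<omega>^(k * n')" using k(2) by (simp add: power_mult)
      also have "k * n' = n * k'" using n' k' by simp
      also have "\<omega>^(n * k') = 1" using \<omega>n by (simp add: power_mult)
      finally show ?thesis .
    qed
    ultimately show False using nz[OF n'0] by blast
  qed
  obtain m where m: "[k * m = Suc 0] (mod n)" using cong_solve_coprime_nat[OF cop] by blast
  have copm: "algebraic_semidom_class.coprime m n"
  proof -
    have "algebraic_semidom_class.coprime (Suc 0) n" by simp
    then have "algebraic_semidom_class.coprime (k * m) n" using cong_imp_coprime[OF cong_sym[OF m]] by blast
    then show ?thesis by simp
  qed
  have zm: "z^m = \<omega>"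
  proof -
    have "z^m = \<omega>^(k * m)" using k(2) by (simp add: power_mult)
    also have "\<dots> = \<omega>^((k * m) mod n)" by (rule pow_mod_root[OF \<omega>n])
    also have "(k * m) mod n = 1" using m n6 by (simp add: cong_def)
    finally show ?thesis by simp
  qed
  have z0: "z \<noteq> 0" using zn n0 by (metis power_0_left zero_neq_one not_gr0)
  have w0: "\<omega> \<noteq> 0" unfolding \<omega>_def by (metis norm_cis norm_zero zero_neq_one)
  have tr: "\<forall>P. poly (of_int_poly P) z = 0 \<longrightarrow> poly (of_int_poly P) \<omega> = 0"
    using coprime_step[OF n0 zn copm] zm by metis
  have finw: "finite (Gq_at \<omega>)" by (rule transfer_finite[OF z0 w0 tr fin])
  have "Re \<omega> = cos (2 * pi / real n)" unfolding \<omega>_def by simp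
  moreover have "cos (pi / 3) \<le> cos (2 * pi / real n)"
  proof (rule cos_monotone_0_pi_le)
    show "0 \<le> 2 * pi / real n" by simp
    show "2 * pi / real n \<le> pi / 3" using n6 by (simp add: field_simps)
    show "pi / 3 \<le> pi" by simp
  qed
  ultimately have "Re \<omega> \<ge> 1/2" using cos_60 by simp
  moreover have "norm \<omega> = 1" unfolding \<omega>_def by simp
  ultimately show False using infinite_unit finw by blast
qed

theorem theorem1p1:
  fixes \<zeta> :: complex
  assumes "\<zeta> \<noteq> 0"
  shows "finite (Gq_at \<zeta>) \<longleftrightarrow> (\<exists>n\<in>{2,3,4,5}. primitive_root_of_unity n \<zeta>)"
proof
  assume ex: "\<exists>n\<in>{2,3,4,5}. primitive_root_of_unity n \<zeta>"
  then show "finite (Gq_at \<zeta>)" using finite_if_primitive by blast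
next
  assume fin: "finite (Gq_at \<zeta>)"
  have "\<exists>k>0. \<zeta>^k = 1" using infinite_nonroot[OF assms] fin by blast
  then obtain k0 where k0: "0 < k0 \<and> \<zeta>^k0 = 1" by blast
  define n where "n = (LEAST k. 0 < k \<and> \<zeta>^k = 1)"
  have n1: "0 < n \<and> \<zeta>^n = 1" unfolding n_def by (rule LeastI[of _ k0]) (rule k0)
  have n2: "\<And>k. 0 < k \<Longrightarrow> k < n \<Longrightarrow> \<zeta>^k \<noteq> 1" unfolding n_def using not_less_Least by blast
  have prim: "primitive_root_of_unity n \<zeta>" unfolding primitive_root_of_unity_def using n1 n2 by blast
  show "\<exists>n\<in>{2,3,4,5}. primitive_root_of_unity n \<zeta>"
  proof (cases "n \<in> {2,3,4,5}")
    case True then show ?thesis using prim by blast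
  next
    case False
    then consider "n = 1" | "n \<ge> 6" using n1 by fastforce
    then show ?thesis
    proof cases
      case 1
      then have "\<zeta> = 1" using n1 by simp
      then have "infinite (Gq_at \<zeta>)" using infinite_unit[of 1] by simp
      then show ?thesis using fin by blast
    next
      case 2
      then show ?thesis using infinite_order_ge6[OF prim 2 fin] by blast
    qed
  qed
qed


end
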